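(* Let $X$ be the Brady complex of $B_4$. Let $R$ be a lozenge of $X$. Then every boundary edge of $R$ is incident to exactly one triangle of $X$ and exactly one lozenge $R'\neq R$ of $X$; moreover $R\cup R'$ is isometric to a (Euclidean) parallelogram.
   Context: Let $B_4=\langle a,b,c,d,e,f\mid ba=ae=eb,\ de=ec=cd,\ bc=cf=fb,\ df=fa=ad,\ ca=ac,\ ef=fe\rangle$ (the 4-string braid group) and $x=bac$. There are exactly sixteen factorizations $x=a_1a_2a_3$ with $a_i\in\{a,\dots,f\}$ (the cyclic length-3 subwords of $bcadefbacdfe$ and $faecfaecfaec$). Brady's complex $V$ has one vertex and one Euclidean tetrahedron for each such factorization, with vertices $v_0,\dots,v_3$, edges $v_{i-1}v_i$ labelled $a_i$ (length 1), $v_0v_2,v_1v_3$ labelled by the group elements $a_1a_2,a_2a_3$ (length $\sqrt2$), and $v_0v_3$ labelled $x$ (length $\sqrt3$), tetrahedra being glued along edges with equal labels; $\pi_1(V)=B_4$ and its universal cover $Y$ is a CAT(0) 3-dimensional simplicial complex on which $B_4$ acts freely cocompactly. $Y$ splits isometrically as $X\times\mathbb{R}$, the $\mathbb{R}$-factor being the direction of the central element $z=x^4$; $X$ (the Brady complex) is a 2-dimensional CAT(0) simplicial complex whose faces are Euclidean equilateral triangles, with a proper cocompact action of $B_4/\langle z\rangle$. The link of every vertex of $X$ is isomorphic to the graph $L$ obtained from the incidence graph of the Fano plane by deleting two adjacent vertices (and their incident edges), edges having length $\pi/3$. A lozenge of $X$ is the union of two faces glued along an edge of valence 2 (an edge contained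 in exactly two faces); a triangle of $X$ is a face not contained in a lozenge. *)

theory Defs
  imports Main
begin

section \<open>The 4-string braid group B_4 in Brady's dual presentation\<close>

datatype gen = A | B | C | D | E | F

text \<open>Words in the generators and their inverses: (s, True) is s, (s, False) is s^-1.\<close>
type_synonym word = "(gen \<times> bool) list"

definition pw :: "gen list \<Rightarrow> word" where
  "pw xs = map (\<lambda>s. (s, True)) xs"

definition braid_rels :: "(word \<times> word) set" where
  "braid_rels = {(pw [B,A], pw [A,E]), (pw [A,E], pw [E,B]),
                 (pw [D,E], pw [E,C]), (pw [E,C], pw [C,D]),
                 (pw [B,C], pw [C,F]), (pw [C,F], pw [F,B]),
                 (pw [D,F], pw [F,A]), (pw [F,A], pw [A,D]),
                 (pw [C,A], pw [A,C]), (pw [E,F], pw [F,E])}"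

text \<open>Equality in B_4: the congruence on words generated by free cancellation and the relations.\<close>
inductive beq :: "word \<Rightarrow> word \<Rightarrow> bool" where
  beq_refl: "beq w w"
| beq_sym: "beq u v \<Longrightarrow> beq v u"
| beq_trans: "beq u v \<Longrightarrow> beq v w \<Longrightarrow> beq u w"
| beq_cancel: "beq (u @ [(s, b), (s, \<not> b)] @ v) (u @ v)"
| beq_rel: "(l, r) \<in> braid_rels \<Longrightarrow> beq (u @ l @ v) (u @ r @ v)"

definition inv_word :: "word \<Rightarrow> word" where
  "inv_word w = rev (map (\<lambda>(s, b). (s, \<not> b)) w)"

definition xw :: word where
  "xw = pw [B, A, C]"

definition xpow :: "int \<Rightarrow> word" where
  "xpow k = (if 0 \<le> k then concat (replicate (nat k) xw)
             else concat (replicate (nat (- k)) (inv_word xw)))"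

text \<open>Vertices of X: left cosets g<x> of the cyclic subgroup generated by x,
  represented as the set of all words representing an element of the coset.\<close>
type_synonym vertex = "word set"

definition vtx :: "word \<Rightarrow> vertex" where
  "vtx g = {v. \<exists>k::int. beq (g @ xpow k) v}"

text \<open>The sixteen factorizations x = a1 a2 a3: cyclic length-3 subwords of
  bcadefbacdfe and faecfaecfaec.\<close>
definition cyc3 :: "gen list \<Rightarrow> gen list set" where
  "cyc3 w = {[w ! i, w ! ((i + 1) mod length w), w ! ((i + 2) mod length w)] | i. i < length w}"

definition factorizations :: "gen list set" where
  "factorizations = cyc3 [B,C,A,D,E,F,B,A,C,D,F,E] \<union> cyc3 [F,A,E,C,F,A,E,C,F,A,E,C]"

text \<open>Faces of X: the tetrahedron of Y at g for the factorization a1 a2 a3 has vertices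
  g, g a1, g a1 a2, g x; projecting along the x-direction gives the equilateral triangle
  with vertices g<x>, g a1<x>, g a1 a2<x>.\<close>
definition Xfaces :: "vertex set set" where
  "Xfaces = {{vtx g, vtx (g @ pw [a1]), vtx (g @ pw [a1, a2])} | g a1 a2 a3.
               [a1, a2, a3] \<in> factorizations}"

definition valence :: "vertex set \<Rightarrow> nat" where
  "valence e = card {T \<in> Xfaces. e \<subseteq> T}"

definition is_lozenge :: "vertex set set \<Rightarrow> bool" where
  "is_lozenge R \<longleftrightarrow> (\<exists>T1 T2. T1 \<in> Xfaces \<and> T2 \<in> Xfaces \<and> T1 \<noteq> T2 \<and> R = {T1, T2}
       \<and> card (T1 \<inter> T2) = 2 \<and> valence (T1 \<inter> T2) = 2)"

definition is_triangle :: "vertex set \<Rightarrow> bool" where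
  "is_triangle T \<longleftrightarrow> T \<in> Xfaces \<and> \<not> (\<exists>R. is_lozenge R \<and> T \<in> R)"

definition boundary_edge :: "vertex set set \<Rightarrow> vertex set \<Rightarrow> bool" where
  "boundary_edge R e \<longleftrightarrow> card e = 2 \<and> (\<exists>T\<in>R. e \<subseteq> T) \<and> \<not> (\<forall>T\<in>R. e \<subseteq> T)"

text \<open>A set P of faces forms a Euclidean parallelogram: it is simplicially isomorphic to the
  parallelogram with side lengths 2 and 1 triangulated by four unit equilateral triangles,
  with bottom vertices p0,p1,p2 (indices 0,1,2) and top vertices q0,q1,q2 (indices 3,4,5),
  triangles p0p1q0, p1q0q1, p1p2q1, p2q1q2.\<close>
definition is_parallelogram :: "vertex set set \<Rightarrow> bool" where
  "is_parallelogram P \<longleftrightarrow> (\<exists>\<phi> :: nat \<Rightarrow> vertex. inj_on \<phi> {0..5} \<and>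
       P = {\<phi> ` {0,1,3}, \<phi> ` {1,3,4}, \<phi> ` {1,2,4}, \<phi> ` {2,4,5}})"

end

theory Submission
  imports Defs
begin


declare pw_def [simp]

lemma beq_ctx: "beq v v' \<Longrightarrow> beq (p @ v @ q) (p @ v' @ q)"
proof (induction rule: beq.induct)
  case (beq_refl w) show ?case by (rule beq.beq_refl)
next
  case (beq_sym u v) show ?case by (rule beq.beq_sym[OF beq_sym.IH])
next
  case (beq_trans u v w) show ?case by (rule beq.beq_trans[OF beq_trans.IH(1) beq_trans.IH(2)])
next
  case (beq_cancel u s b v)
  have "beq ((p @ u) @ [(s, b), (s, \<not> b)] @ (v @ q)) ((p @ u) @ (v @ q))" by (rule beq.beq_cancel)
  then show ?case by simp
next
  case (beq_rel l r u v)
  have "beq ((p @ u) @ l @ (v @ q)) ((p @ u) @ r @ (v @ q))" by (rule beq.beq_rel[OF beq_rel])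
  then show ?case by simp
qed

lemma beq_app: "beq u u' \<Longrightarrow> beq v v' \<Longrightarrow> beq (u @ v) (u' @ v')"
proof -
  assume a: "beq u u'" "beq v v'"
  have "beq ([] @ u @ v) ([] @ u' @ v)" by (rule beq_ctx[OF a(1)])
  moreover have "beq (u' @ v @ []) (u' @ v' @ [])" by (rule beq_ctx[OF a(2)])
  ultimately show ?thesis by (metis append_Nil append_Nil2 beq.beq_trans)
qed

lemma beq_appL: "beq v v' \<Longrightarrow> beq (u @ v) (u @ v')" by (rule beq_app[OF beq_refl])
lemma beq_appR: "beq u u' \<Longrightarrow> beq (u @ v) (u' @ v)" by (rule beq_app[OF _ beq_refl])

lemma beq_sym_iff: "beq u v = beq v u" by (meson beq_sym)

lemma inv_word_Cons: "inv_word (s # w) = inv_word w @ [(fst s, \<not> snd s)]"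
  by (cases s) (simp add: inv_word_def)
lemma inv_word_Nil[simp]: "inv_word [] = []" by (simp add: inv_word_def)

lemma beq_cancel2: "beq (u @ [(s, b), (s, \<not> b)] @ v) (u @ v)" by (rule beq_cancel)

lemma beq_trans'[trans]: "beq a b \<Longrightarrow> beq b c \<Longrightarrow> beq a c" by (rule beq_trans)

lemma inv_right: "beq (w @ inv_word w) []"
proof (induction w)
  case Nil then show ?case by (simp add: beq_refl)
next
  case (Cons s w)
  obtain a b where s: "s = (a, b)" by force
  have "beq ((s # w) @ inv_word (s # w)) ([s] @ (w @ inv_word w) @ [(a, \<not> b)])"
    by (simp add: s inv_word_Cons beq_refl)
  also have "beq ([s] @ (w @ inv_word w) @ [(a, \<not> b)]) ([s] @ [] @ [(a, \<not> b)])"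
    by (rule beq_ctx[OF Cons])
  also have "[s] @ [] @ [(a, \<not> b)] = [] @ [(a, b), (a, \<not> b)] @ []" by (simp add: s)
  also have "beq ([] @ [(a, b), (a, \<not> b)] @ []) ([] @ [])" by (rule beq_cancel)
  finally show ?case by simp
qed

lemma inv_left: "beq (inv_word w @ w) []"
proof (induction w)
  case Nil then show ?case by (simp add: beq_refl)
next
  case (Cons s w)
  obtain a b where s: "s = (a, b)" by force
  have "inv_word (s # w) @ s # w = inv_word w @ [(a, \<not> b), (a, \<not> \<not> b)] @ w" by (simp add: s inv_word_Cons)
  also have "beq (inv_word w @ [(a, \<not> b), (a, \<not> \<not> b)] @ w) (inv_word w @ w)" by (rule beq_cancel)
  also have "beq (inv_word w @ w) []" by (rule Cons)
  finally show ?case .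
qed

lemma beq_cancelL: "beq (h @ u) (h @ v) \<Longrightarrow> beq u v"
proof -
  assume a: "beq (h @ u) (h @ v)"
  have "beq (inv_word h @ h @ u) (inv_word h @ h @ v)" by (rule beq_appL[OF a])
  moreover have "beq ((inv_word h @ h) @ u) ([] @ u)" by (rule beq_appR[OF inv_left])
  moreover have "beq ((inv_word h @ h) @ v) ([] @ v)" by (rule beq_appR[OF inv_left])
  ultimately show ?thesis by (metis append_assoc append_Nil beq_sym beq_trans')
qed

lemma beq_cancelR: "beq (u @ h) (v @ h) \<Longrightarrow> beq u v"
proof -
  assume a: "beq (u @ h) (v @ h)"
  have "beq (u @ h @ inv_word h) (v @ h @ inv_word h)" using beq_appR[OF a, of "inv_word h"] by simp
  moreover have "beq (u @ (h @ inv_word h)) (u @ [])" by (rule beq_appL[OF inv_right])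
  moreover have "beq (v @ (h @ inv_word h)) (v @ [])" by (rule beq_appL[OF inv_right])
  ultimately show ?thesis by (metis append_Nil2 beq_sym beq_trans)
qed

section \<open>Length homomorphism\<close>

definition len :: "word \<Rightarrow> int" where
  "len w = sum_list (map (\<lambda>(s, b). if b then 1 else -1) w)"

lemma len_append[simp]: "len (u @ v) = len u + len v" by (simp add: len_def)
lemma len_Nil[simp]: "len [] = 0" by (simp add: len_def)
lemma len_Cons[simp]: "len ((s,b) # w) = (if b then 1 else -1) + len w" by (simp add: len_def)

lemma beq_len: "beq u v \<Longrightarrow> len u = len v"
  by (induction rule: beq.induct) (auto simp: braid_rels_def)

lemma len_inv[simp]: "len (inv_word w) = - len w"
  by (induction w) (auto simp: inv_word_Cons)

section \<open>Permutation homomorphism to S_4\<close>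

definition tsw :: "nat \<Rightarrow> nat \<Rightarrow> nat \<Rightarrow> nat" where
  "tsw i j n = (if n = i then j else if n = j then i else n)"

fun gsw :: "gen \<Rightarrow> nat \<Rightarrow> nat" where
  "gsw A = tsw 0 1" | "gsw E = tsw 1 2" | "gsw B = tsw 0 2"
| "gsw C = tsw 2 3" | "gsw F = tsw 3 0" | "gsw D = tsw 1 3"

definition pf :: "word \<Rightarrow> nat \<Rightarrow> nat" where
  "pf w = foldr (\<lambda>(s, b) g. gsw s \<circ> g) w id"

lemma pf_Nil[simp]: "pf [] = id" by (simp add: pf_def)
lemma pf_Cons[simp]: "pf ((s,b) # w) = gsw s \<circ> pf w" by (simp add: pf_def)
lemma pf_append[simp]: "pf (u @ v) = pf u \<circ> pf v"
  by (induction u) (auto simp: pf_def)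

lemma gsw_gsw: "gsw s (gsw s n) = n"
  by (cases s) (auto simp: tsw_def)

lemma gsw_big: "n \<ge> 4 \<Longrightarrow> gsw s n = n"
  by (cases s) (auto simp: tsw_def)

lemma pf_big: "n \<ge> 4 \<Longrightarrow> pf w n = n"
  by (induction w) (auto simp: gsw_big)

lemma pf_eq4: "map (pf u) [0,1,2,3] = map (pf v) [0,1,2,3] \<Longrightarrow> pf u = pf v"
proof
  fix n assume m: "map (pf u) [0,1,2,3] = map (pf v) [0,1,2,3]"
  show "pf u n = pf v n"
  proof (cases "n < 4")
    case True then have "n = 0 \<or> n = 1 \<or> n = 2 \<or> n = 3" by auto
    then show ?thesis using m by (elim disjE) simp_all
  next
    case False then show ?thesis by (simp add: pf_big)
  qed
qed

lemma rel_pf: assumes "(l, r) \<in> braid_rels" shows "pf l = pf r"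
  using assms unfolding braid_rels_def
  by (simp only: insert_iff prod.inject empty_iff)
     (elim disjE conjE FalseE; hypsubst; rule pf_eq4; simp add: tsw_def)

lemma beq_pf: "beq u v \<Longrightarrow> pf u = pf v"
proof (induction rule: beq.induct)
  case (beq_cancel u s b v)
  then show ?case by (simp add: fun_eq_iff gsw_gsw)
next
  case (beq_rel l r u v)
  have "pf l = pf r" using beq_rel by (rule rel_pf)
  then show ?case by simp
qed auto

lemma atom_inj: "beq [(s, True)] [(t, True)] \<Longrightarrow> s = t"
proof -
  assume "beq [(s, True)] [(t, True)]"
  then have "pf [(s, True)] = pf [(t, True)]" by (rule beq_pf)
  then have "map (gsw s) [0,1,2,3] = map (gsw t) [0,1,2,3]" by simp
  then show ?thesis by (cases s; cases t) (simp_all add: tsw_def)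
qed




definition rulesG :: "(gen list \<times> gen list) list" where
  "rulesG = [([B,A],[A,E]), ([A,E],[E,B]), ([D,E],[E,C]), ([E,C],[C,D]), ([B,C],[C,F]), ([C,F],[F,B]),
             ([D,F],[F,A]), ([F,A],[A,D]), ([C,A],[A,C]), ([E,F],[F,E])]"

definition rulesS :: "(gen list \<times> gen list) list" where
  "rulesS = rulesG @ map (\<lambda>(l, r). (r, l)) rulesG"

lemma rulesS_beq: "(l, r) \<in> set rulesS \<Longrightarrow> beq (pw l) (pw r)"
proof -
  assume a: "(l, r) \<in> set rulesS"
  have g: "(l, r) \<in> set rulesG \<Longrightarrow> (pw l, pw r) \<in> braid_rels" for l r
    unfolding rulesG_def braid_rels_def by (simp del: pw_def) (elim disjE; simp)
  show ?thesis
  proof (cases "(l, r) \<in> set rulesG")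
    case True
    have "beq ([] @ pw l @ []) ([] @ pw r @ [])" by (rule beq_rel[OF g[OF True]])
    then show ?thesis by simp
  next
    case False
    then have "(r, l) \<in> set rulesG" using a unfolding rulesS_def by auto
    then have "beq ([] @ pw r @ []) ([] @ pw l @ [])" by (rule beq_rel[OF g])
    then show ?thesis by (simp add: beq_sym_iff)
  qed
qed

definition rw1 :: "gen list \<Rightarrow> gen list list" where
  "rw1 xs = concat (map (\<lambda>i. concat (map (\<lambda>(l, r). if take 2 (drop i xs) = l then [take i xs @ r @ drop (i + 2) xs] else []) rulesS)) [0..<length xs])"

lemma rw1_sound: "ys \<in> set (rw1 xs) \<Longrightarrow> beq (pw xs) (pw ys)"
proof -
  assume "ys \<in> set (rw1 xs)"
  then obtain i l r where i: "(l, r) \<in> set rulesS" "take 2 (drop i xs) = l"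
    "ys = take i xs @ r @ drop (i + 2) xs"
    unfolding rw1_def by (auto split: if_splits)
  have xs: "xs = take i xs @ l @ drop (i + 2) xs"
    using i(2) by (metis append_take_drop_id drop_drop add.commute)
  have "beq (pw (take i xs) @ pw l @ pw (drop (i + 2) xs)) (pw (take i xs) @ pw r @ pw (drop (i + 2) xs))"
    by (rule beq_ctx[OF rulesS_beq[OF i(1)]])
  moreover have "pw (take i xs @ l @ drop (i + 2) xs) = pw (take i xs) @ pw l @ pw (drop (i + 2) xs)"
    by simp
  moreover have "pw (take i xs @ r @ drop (i + 2) xs) = pw (take i xs) @ pw r @ pw (drop (i + 2) xs)"
    by simp
  moreover have "pw xs = pw (take i xs @ l @ drop (i + 2) xs)" by (rule arg_cong[OF xs])
  ultimately show ?thesis using i(3) by metis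
qed

fun chain :: "gen list \<Rightarrow> gen list list \<Rightarrow> bool" where
  "chain x [] = True"
| "chain x (y # zs) = (y \<in> set (rw1 x) \<and> chain y zs)"

lemma chain_sound: "chain x zs \<Longrightarrow> beq (pw x) (pw (last (x # zs)))"
proof (induction zs arbitrary: x)
  case Nil then show ?case by (simp add: beq_refl)
next
  case (Cons y zs)
  from Cons.prems have y: "y \<in> set (rw1 x)" and c: "chain y zs" by simp_all
  have a: "beq (pw x) (pw y)" by (rule rw1_sound[OF y])
  have b: "beq (pw y) (pw (last (y # zs)))" by (rule Cons.IH[OF c])
  have "last (x # y # zs) = last (y # zs)" by simp
  then show ?case using beq_trans[OF a b] by metis
qed

lemma fx_ACD: "beq (pw [A,C,D]) (pw [B,A,C])"
  using chain_sound[of "[A,C,D]" "[[A,E,C],[B,A,C]]"] by (simp add: rw1_def rulesS_def rulesG_def)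

lemma fx_ADE: "beq (pw [A,D,E]) (pw [B,A,C])"
  using chain_sound[of "[A,D,E]" "[[A,E,C],[B,A,C]]"] by (simp add: rw1_def rulesS_def rulesG_def)

lemma fx_AEC: "beq (pw [A,E,C]) (pw [B,A,C])"
  using chain_sound[of "[A,E,C]" "[[B,A,C]]"] by (simp add: rw1_def rulesS_def rulesG_def)

lemma fx_BAC: "beq (pw [B,A,C]) (pw [B,A,C])"
  using chain_sound[of "[B,A,C]" "[]"] by (simp add: rw1_def rulesS_def rulesG_def)

lemma fx_BCA: "beq (pw [B,C,A]) (pw [B,A,C])"
  using chain_sound[of "[B,C,A]" "[[B,A,C]]"] by (simp add: rw1_def rulesS_def rulesG_def)

lemma fx_CAD: "beq (pw [C,A,D]) (pw [B,A,C])"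
  using chain_sound[of "[C,A,D]" "[[A,C,D],[A,E,C],[B,A,C]]"] by (simp add: rw1_def rulesS_def rulesG_def)

lemma fx_CDF: "beq (pw [C,D,F]) (pw [B,A,C])"
  using chain_sound[of "[C,D,F]" "[[C,F,A],[B,C,A],[B,A,C]]"] by (simp add: rw1_def rulesS_def rulesG_def)

lemma fx_CFA: "beq (pw [C,F,A]) (pw [B,A,C])"
  using chain_sound[of "[C,F,A]" "[[B,C,A],[B,A,C]]"] by (simp add: rw1_def rulesS_def rulesG_def)

lemma fx_DEF: "beq (pw [D,E,F]) (pw [B,A,C])"
  using chain_sound[of "[D,E,F]" "[[E,C,F],[E,B,C],[A,E,C],[B,A,C]]"] by (simp add: rw1_def rulesS_def rulesG_def)

lemma fx_DFE: "beq (pw [D,F,E]) (pw [B,A,C])"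
  using chain_sound[of "[D,F,E]" "[[F,A,E],[A,D,E],[A,E,C],[B,A,C]]"] by (simp add: rw1_def rulesS_def rulesG_def)

lemma fx_EBC: "beq (pw [E,B,C]) (pw [B,A,C])"
  using chain_sound[of "[E,B,C]" "[[A,E,C],[B,A,C]]"] by (simp add: rw1_def rulesS_def rulesG_def)

lemma fx_ECF: "beq (pw [E,C,F]) (pw [B,A,C])"
  using chain_sound[of "[E,C,F]" "[[E,B,C],[A,E,C],[B,A,C]]"] by (simp add: rw1_def rulesS_def rulesG_def)

lemma fx_EFB: "beq (pw [E,F,B]) (pw [B,A,C])"
  using chain_sound[of "[E,F,B]" "[[E,C,F],[E,B,C],[A,E,C],[B,A,C]]"] by (simp add: rw1_def rulesS_def rulesG_def)

lemma fx_FAE: "beq (pw [F,A,E]) (pw [B,A,C])"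
  using chain_sound[of "[F,A,E]" "[[A,D,E],[A,E,C],[B,A,C]]"] by (simp add: rw1_def rulesS_def rulesG_def)

lemma fx_FBA: "beq (pw [F,B,A]) (pw [B,A,C])"
  using chain_sound[of "[F,B,A]" "[[C,F,A],[B,C,A],[B,A,C]]"] by (simp add: rw1_def rulesS_def rulesG_def)

lemma fx_FEB: "beq (pw [F,E,B]) (pw [B,A,C])"
  using chain_sound[of "[F,E,B]" "[[F,A,E],[A,D,E],[A,E,C],[B,A,C]]"] by (simp add: rw1_def rulesS_def rulesG_def)

lemma cx_A: "beq (pw [B,A,C,A]) (pw [E,B,A,C])"
  using chain_sound[of "[B,A,C,A]" "[[A,E,C,A],[E,B,C,A],[E,B,A,C]]"] by (simp add: rw1_def rulesS_def rulesG_def)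

lemma cx_B: "beq (pw [B,A,C,B]) (pw [D,B,A,C])"
  using chain_sound[of "[B,A,C,B]" "[[A,E,C,B],[E,B,C,B],[E,C,F,B],[D,E,F,B],[D,E,C,F],[D,E,B,C],[D,A,E,C],[D,B,A,C]]"] by (simp add: rw1_def rulesS_def rulesG_def)

lemma cx_C: "beq (pw [B,A,C,C]) (pw [F,B,A,C])"
  using chain_sound[of "[B,A,C,C]" "[[B,C,A,C],[C,F,A,C],[F,B,A,C]]"] by (simp add: rw1_def rulesS_def rulesG_def)

lemma cx_D: "beq (pw [B,A,C,D]) (pw [B,B,A,C])"
  using chain_sound[of "[B,A,C,D]" "[[B,A,E,C],[B,B,A,C]]"] by (simp add: rw1_def rulesS_def rulesG_def)

lemma cx_E: "beq (pw [B,A,C,E]) (pw [C,B,A,C])"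
  using chain_sound[of "[B,A,C,E]" "[[A,E,C,E],[A,C,D,E],[C,A,D,E],[C,A,E,C],[C,B,A,C]]"] by (simp add: rw1_def rulesS_def rulesG_def)

lemma cx_F: "beq (pw [B,A,C,F]) (pw [A,B,A,C])"
  using chain_sound[of "[B,A,C,F]" "[[A,E,C,F],[A,E,B,C],[A,A,E,C],[A,B,A,C]]"] by (simp add: rw1_def rulesS_def rulesG_def)



fun psi :: "gen \<Rightarrow> gen" where
  "psi A = E" | "psi B = D" | "psi C = F" | "psi D = B" | "psi E = C" | "psi F = A"

fun phi :: "gen \<Rightarrow> gen" where
  "phi A = F" | "phi B = D" | "phi C = E" | "phi D = B" | "phi E = A" | "phi F = C"

lemma conj1: "beq (xw @ pw [s]) (pw [psi s] @ xw)"
  using cx_A cx_B cx_C cx_D cx_E cx_F by (cases s) (simp_all add: xw_def)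

lemma psi4: "(psi ^^ 4) s = s"
  by (cases s) (simp_all add: numeral_eq_Suc)

lemma psi4f: "psi ^^ 4 = id" by (rule ext) (simp add: psi4)

lemma psi_mod: "psi ^^ n = psi ^^ (n mod 4)"
proof -
  have "n = n mod 4 + 4 * (n div 4)" by simp
  then have "psi ^^ n = (psi ^^ (n mod 4)) \<circ> ((psi ^^ 4) ^^ (n div 4))"
    by (metis funpow_add funpow_mult)
  also have "(psi ^^ 4) ^^ (n div 4) = id" by (simp add: psi4f)
  finally show ?thesis by simp
qed

definition xn :: "nat \<Rightarrow> word" where "xn n = concat (replicate n xw)"
definition yn :: "nat \<Rightarrow> word" where "yn n = concat (replicate n (inv_word xw))"

lemma concat_rep_comm: "concat (replicate n w) @ w = w @ concat (replicate n w)"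
  by (induction n) auto

lemma xn_0[simp]: "xn 0 = []" by (simp add: xn_def)
lemma xn_Suc: "xn (Suc n) = xn n @ xw" by (simp add: xn_def concat_rep_comm)
lemma yn_0[simp]: "yn 0 = []" by (simp add: yn_def)
lemma yn_Suc: "yn (Suc n) = yn n @ inv_word xw" by (simp add: yn_def concat_rep_comm)

lemma xpow_pos: "xpow (int n) = xn n" by (simp add: xpow_def xn_def)
lemma xpow_neg: "xpow (- int n) = yn n" by (cases "n = 0") (simp_all add: xpow_def yn_def)
lemma xpow_0[simp]: "xpow 0 = []" by (simp add: xpow_def)
lemma xpow_1: "xpow 1 = xw" by (simp add: xpow_def)

lemma len_xw[simp]: "len xw = 3" by (simp add: xw_def)
lemma len_xn: "len (xn n) = 3 * int n" by (induction n) (simp_all add: xn_Suc)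
lemma len_yn: "len (yn n) = - 3 * int n" by (induction n) (simp_all add: yn_Suc)
lemma len_xpow: "len (xpow k) = 3 * k"
proof (cases "k \<ge> 0")
  case True then have "k = int (nat k)" by simp
  then show ?thesis by (metis xpow_pos len_xn)
next
  case False then have "k = - int (nat (- k))" by simp
  then show ?thesis by (metis xpow_neg len_yn mult_minus_right mult_minus_left)
qed

lemma conj_xn: "beq (xn n @ pw [s]) (pw [(psi ^^ n) s] @ xn n)"
proof (induction n arbitrary: s)
  case 0 then show ?case by (simp add: beq_refl)
next
  case (Suc n)
  have "xn (Suc n) @ pw [s] = xn n @ (xw @ pw [s])" by (simp add: xn_Suc)
  also have "beq (xn n @ (xw @ pw [s])) (xn n @ (pw [psi s] @ xw))" by (rule beq_appL[OF conj1])
  also have "xn n @ (pw [psi s] @ xw) = (xn n @ pw [psi s]) @ xw" by simp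
  also have "beq ((xn n @ pw [psi s]) @ xw) ((pw [(psi ^^ n) (psi s)] @ xn n) @ xw)" by (rule beq_appR[OF Suc.IH])
  also have "(pw [(psi ^^ n) (psi s)] @ xn n) @ xw = pw [(psi ^^ Suc n) s] @ xn (Suc n)"
    by (simp add: xn_Suc funpow_Suc_right del: funpow.simps)
  finally show ?case .
qed

lemma beq_refl': "u = v \<Longrightarrow> beq u v" by (simp add: beq_refl)

lemma xpow_succ: "beq (xpow (k + 1)) (xpow k @ xw)"
proof (cases "k \<ge> 0")
  case True define n where "n = nat k"
  have k: "k = int n" using True unfolding n_def by simp
  have "k + 1 = int (Suc n)" using k by simp
  then have "xpow (k + 1) = xn n @ xw" by (simp only: xpow_pos xn_Suc)
  then show ?thesis using k by (simp add: xpow_pos beq_refl)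
next
  case False define n where "n = nat (- k) - 1"
  have k: "k = - int (Suc n)" using False unfolding n_def by simp
  have "xpow (k + 1) = xpow (- int n)" using k by simp
  then have "xpow (k + 1) = yn n" by (simp add: xpow_neg)
  moreover have "xpow k = yn n @ inv_word xw" using k by (simp only: xpow_neg yn_Suc)
  moreover have "beq (yn n @ []) (yn n @ (inv_word xw @ xw))" by (rule beq_appL[OF beq_sym[OF inv_left]])
  ultimately show ?thesis by simp
qed

lemma xpow_pred: "beq (xpow (k - 1)) (xpow k @ inv_word xw)"
proof (cases "k > 0")
  case True define n where "n = nat k - 1"
  have k: "k = int (Suc n)" using True unfolding n_def by simp
  have "xpow (k - 1) = xn n" using k by (simp add: xpow_pos[symmetric])
  moreover have "xpow k = xn n @ xw" using k by (simp only: xpow_pos xn_Suc)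
  moreover have "beq (xn n @ []) (xn n @ (xw @ inv_word xw))" by (rule beq_appL[OF beq_sym[OF inv_right]])
  ultimately show ?thesis by simp
next
  case False define n where "n = nat (- k)"
  have k: "k = - int n" using False unfolding n_def by simp
  have "k - 1 = - int (Suc n)" using k by simp
  then have "xpow (k - 1) = yn n @ inv_word xw" by (simp only: xpow_neg yn_Suc)
  then show ?thesis using k by (simp add: xpow_neg beq_refl)
qed

lemma xpow_add: "beq (xpow k @ xpow m) (xpow (k + m))"
proof (induction m rule: int_induct[where k = 0])
  case base then show ?case by (simp add: beq_refl)
next
  case (step1 i)
  have "beq (xpow k @ xpow (i + 1)) (xpow k @ (xpow i @ xw))" by (rule beq_appL[OF xpow_succ])
  also have "xpow k @ (xpow i @ xw) = (xpow k @ xpow i) @ xw" by simp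
  also have "beq ((xpow k @ xpow i) @ xw) (xpow (k + i) @ xw)" by (rule beq_appR[OF step1(2)])
  also have "beq (xpow (k + i) @ xw) (xpow (k + i + 1))" by (rule beq_sym[OF xpow_succ])
  finally show ?case by (simp add: add.assoc)
next
  case (step2 i)
  have "beq (xpow k @ xpow (i - 1)) (xpow k @ (xpow i @ inv_word xw))" by (rule beq_appL[OF xpow_pred])
  also have "xpow k @ (xpow i @ inv_word xw) = (xpow k @ xpow i) @ inv_word xw" by simp
  also have "beq ((xpow k @ xpow i) @ inv_word xw) (xpow (k + i) @ inv_word xw)" by (rule beq_appR[OF step2(2)])
  also have "beq (xpow (k + i) @ inv_word xw) (xpow (k + i - 1))" by (rule beq_sym[OF xpow_pred])
  finally show ?case by (simp add: algebra_simps)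
qed

lemma vtx_eq_iff: "vtx u = vtx v \<longleftrightarrow> (\<exists>k. beq (u @ xpow k) v)"
proof
  assume e: "vtx u = vtx v"
  have "v \<in> vtx v" unfolding vtx_def by (rule CollectI, rule exI[of _ 0]) (simp add: beq_refl)
  then have "v \<in> vtx u" using e by simp
  then show "\<exists>k. beq (u @ xpow k) v" by (simp add: vtx_def)
next
  assume "\<exists>k. beq (u @ xpow k) v"
  then obtain k where k: "beq (u @ xpow k) v" by blast
  show "vtx u = vtx v"
  proof
    show "vtx v \<subseteq> vtx u"
    proof
      fix w assume "w \<in> vtx v"
      then obtain m where m: "beq (v @ xpow m) w" by (auto simp: vtx_def)
      have "beq (u @ xpow (k + m)) (u @ (xpow k @ xpow m))" by (rule beq_appL[OF beq_sym[OF xpow_add]])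
      also have "u @ (xpow k @ xpow m) = (u @ xpow k) @ xpow m" by simp
      also have "beq ((u @ xpow k) @ xpow m) (v @ xpow m)" by (rule beq_appR[OF k])
      also note m
      finally show "w \<in> vtx u" by (auto simp: vtx_def)
    qed
  next
    show "vtx u \<subseteq> vtx v"
    proof
      fix w assume "w \<in> vtx u"
      then obtain m where m: "beq (u @ xpow m) w" by (auto simp: vtx_def)
      have "beq (v @ xpow (m - k)) ((u @ xpow k) @ xpow (m - k))" by (rule beq_appR[OF beq_sym[OF k]])
      also have "(u @ xpow k) @ xpow (m - k) = u @ (xpow k @ xpow (m - k))" by simp
      also have "beq (u @ (xpow k @ xpow (m - k))) (u @ xpow (k + (m - k)))" by (rule beq_appL[OF xpow_add])
      also have "u @ xpow (k + (m - k)) = u @ xpow m" by simp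
      also note m
      finally show "w \<in> vtx v" by (auto simp: vtx_def)
    qed
  qed
qed

lemma vtx_beq: "beq u v \<Longrightarrow> vtx u = vtx v"
  by (subst vtx_eq_iff) (rule exI[of _ 0], simp)

lemma vtx_app_beq: "beq a b \<Longrightarrow> vtx (u @ a) = vtx (u @ b)"
  by (rule vtx_beq[OF beq_appL])

lemma vtx_xw: "vtx (u @ xw) = vtx u"
proof -
  have "vtx u = vtx (u @ xw)" by (subst vtx_eq_iff) (rule exI[of _ 1], simp add: xpow_1 beq_refl)
  then show ?thesis by simp
qed

lemma vtx_xn: "vtx (u @ xn n) = vtx u"
proof (induction n)
  case 0 then show ?case by simp
next
  case (Suc n)
  have "vtx (u @ xn (Suc n)) = vtx ((u @ xn n) @ xw)" by (simp add: xn_Suc)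
  also have "\<dots> = vtx (u @ xn n)" by (rule vtx_xw)
  finally show ?case using Suc by simp
qed

lemma vtx_eq_len: "vtx (h @ u) = vtx (h @ v) \<Longrightarrow> \<exists>k. beq (u @ xpow k) v \<and> len v = len u + 3 * k"
proof -
  assume "vtx (h @ u) = vtx (h @ v)"
  then obtain k where "beq ((h @ u) @ xpow k) (h @ v)" by (auto simp: vtx_eq_iff)
  then have "beq (h @ (u @ xpow k)) (h @ v)" by simp
  then have b: "beq (u @ xpow k) v" by (rule beq_cancelL)
  then have "len v = len u + 3 * k" using beq_len[OF b] by (simp add: len_xpow)
  then show ?thesis using b by blast
qed

lemma len_pw[simp]: "len (map (\<lambda>s. (s, True)) u) = int (length u)"
  by (induction u) auto

definition vdiff :: "gen list \<Rightarrow> gen list \<Rightarrow> bool" where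
  "vdiff u v = (let d = int (length v) - int (length u) in
     d mod 3 \<noteq> 0 \<or> map (pf (pw u @ xpow (d div 3))) [0,1,2,3] \<noteq> map (pf (pw v)) [0,1,2,3])"

lemma vdiff_neq: "vdiff u v \<Longrightarrow> vtx (h @ pw u) \<noteq> vtx (h @ pw v)"
proof
  assume d: "vdiff u v" and e: "vtx (h @ pw u) = vtx (h @ pw v)"
  from vtx_eq_len[OF e] obtain k where k: "beq (pw u @ xpow k) (pw v)" "len (pw v) = len (pw u) + 3 * k" by blast
  then have "int (length v) - int (length u) = 3 * k" by simp
  moreover have "pf (pw u @ xpow k) = pf (pw v)" by (rule beq_pf[OF k(1)])
  ultimately show False using d unfolding vdiff_def Let_def by (simp del: pf_append)
qed

lemma nd01: "vtx h \<noteq> vtx (h @ pw [a])"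
proof
  assume "vtx h = vtx (h @ pw [a])"
  then have "vtx (h @ []) = vtx (h @ pw [a])" by simp
  from vtx_eq_len[OF this] obtain k where "len (pw [a]) = len [] + 3 * k" by blast
  then show False by simp presburger
qed

lemma nd02: "vtx h \<noteq> vtx (h @ pw [a, b])"
proof
  assume "vtx h = vtx (h @ pw [a, b])"
  then have "vtx (h @ []) = vtx (h @ pw [a, b])" by simp
  from vtx_eq_len[OF this] obtain k where "len (pw [a, b]) = len [] + 3 * k" by blast
  then show False by simp presburger
qed

lemma nd12: "vtx (h @ pw [a]) \<noteq> vtx (h @ pw [b, c])"
proof
  assume "vtx (h @ pw [a]) = vtx (h @ pw [b, c])"
  from vtx_eq_len[OF this] obtain k where "len (pw [b, c]) = len (pw [a]) + 3 * k" by blast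
  then show False by simp presburger
qed

lemma atom_eq: "vtx (h @ pw [s]) = vtx (h @ pw [t]) \<Longrightarrow> s = t"
proof -
  assume "vtx (h @ pw [s]) = vtx (h @ pw [t])"
  from vtx_eq_len[OF this] obtain k where k: "beq (pw [s] @ xpow k) (pw [t])" "len (pw [t]) = len (pw [s]) + 3 * k" by blast
  then have "k = 0" by simp
  then show ?thesis using k(1) atom_inj by simp
qed

lemma pair_eq: "vtx (h @ pw [a, b]) = vtx (h @ pw [c, d]) \<Longrightarrow> beq (pw [a, b]) (pw [c, d])"
proof -
  assume "vtx (h @ pw [a, b]) = vtx (h @ pw [c, d])"
  from vtx_eq_len[OF this] obtain k where k: "beq (pw [a, b] @ xpow k) (pw [c, d])" "len (pw [c, d]) = len (pw [a, b]) + 3 * k" by blast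
  then have "k = 0" by simp
  then show ?thesis using k(1) by simp
qed




definition factsL :: "gen list list" where
 "factsL = [[A,C,D],[A,D,E],[A,E,C],[B,A,C],[B,C,A],[C,A,D],[C,D,F],[C,F,A],[D,E,F],[D,F,E],[E,B,C],[E,C,F],[E,F,B],[F,A,E],[F,B,A],[F,E,B]]"

lemma cyc3_alt: "cyc3 w = set (map (\<lambda>i. [w ! i, w ! ((i + 1) mod length w), w ! ((i + 2) mod length w)]) [0..<length w])"
  unfolding cyc3_def by auto

lemma facts_eq: "factorizations = set factsL"
  unfolding factorizations_def cyc3_alt factsL_def
  by (simp add: upt_conv_Cons) auto

definition rot :: "gen list \<Rightarrow> gen list" where
  "rot f = [f ! 1, f ! 2, phi (f ! 0)]"

lemma fl_len_all: "\<forall>f\<in>set factsL. f = [f ! 0, f ! 1, f ! 2]"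
  unfolding factsL_def by simp
lemma fl_len: "f \<in> set factsL \<Longrightarrow> f = [f ! 0, f ! 1, f ! 2]"
  using fl_len_all by blast

lemma fl_x: "f \<in> set factsL \<Longrightarrow> beq (pw f) xw"
  unfolding factsL_def xw_def
  using fx_ACD fx_ADE fx_AEC fx_BAC fx_BCA fx_CAD fx_CDF fx_CFA fx_DEF fx_DFE fx_EBC fx_ECF fx_EFB fx_FAE fx_FBA fx_FEB
  by (simp only: set_simps insert_iff empty_iff) (elim disjE FalseE; hypsubst; assumption)

lemma fl_rot_all: "\<forall>f\<in>set factsL. rot f \<in> set factsL"
  unfolding factsL_def rot_def by simp
lemma fl_rot: "f \<in> set factsL \<Longrightarrow> rot f \<in> set factsL"
  using fl_rot_all by blast

lemma fl_psi_all: "\<forall>f\<in>set factsL. map psi f \<in> set factsL"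
  unfolding factsL_def by simp
lemma fl_psi: "f \<in> set factsL \<Longrightarrow> map psi f \<in> set factsL"
  using fl_psi_all by blast

lemma fl_psin: "f \<in> set factsL \<Longrightarrow> map (psi ^^ n) f \<in> set factsL"
proof (induction n)
  case 0 then show ?case by simp
next
  case (Suc n)
  show ?case using fl_psi[OF Suc.IH[OF Suc.prems]] by (simp add: comp_def)
qed

lemma fl_rotn: "f \<in> set factsL \<Longrightarrow> (rot ^^ j) f \<in> set factsL"
  by (induction j) (auto intro: fl_rot)

lemma fl_det_all: "\<forall>f\<in>set factsL. \<forall>g\<in>set factsL. f ! 0 = g ! 0 \<and> f ! 1 = g ! 1 \<longrightarrow> f = g"
  unfolding factsL_def by simp
lemma fl_det: "f \<in> set factsL \<Longrightarrow> g \<in> set factsL \<Longrightarrow> f ! 0 = g ! 0 \<Longrightarrow> f ! 1 = g ! 1 \<Longrightarrow> f = g"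
  using fl_det_all by blast

definition face :: "word \<Rightarrow> gen list \<Rightarrow> vertex set" where
  "face u f = {vtx u, vtx (u @ pw [f ! 0]), vtx (u @ pw [f ! 0, f ! 1])}"

lemma Xfaces_iff: "T \<in> Xfaces \<longleftrightarrow> (\<exists>g f. f \<in> set factsL \<and> T = face g f)"
proof
  assume "T \<in> Xfaces"
  then obtain g a1 a2 a3 where "[a1, a2, a3] \<in> set factsL" "T = {vtx g, vtx (g @ pw [a1]), vtx (g @ pw [a1, a2])}"
    unfolding Xfaces_def facts_eq by blast
  then have "[a1, a2, a3] \<in> set factsL \<and> T = face g [a1, a2, a3]" unfolding face_def by simp
  then show "\<exists>g f. f \<in> set factsL \<and> T = face g f" by blast
next
  assume "\<exists>g f. f \<in> set factsL \<and> T = face g f"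
  then obtain g f where f: "f \<in> set factsL" "T = face g f" by blast
  have "f = [f ! 0, f ! 1, f ! 2]" by (rule fl_len[OF f(1)])
  then have "[f ! 0, f ! 1, f ! 2] \<in> factorizations" using f(1) facts_eq by simp
  then show "T \<in> Xfaces" unfolding Xfaces_def mem_Collect_eq f(2)
    by (intro exI[of _ g] exI[of _ "f ! 0"] exI[of _ "f ! 1"] exI[of _ "f ! 2"]) (simp add: face_def)
qed

lemma face_in: "f \<in> set factsL \<Longrightarrow> face u f \<in> Xfaces"
  using Xfaces_iff by blast

lemma face_beq: "beq u u' \<Longrightarrow> face u f = face u' f"
proof -
  assume b: "beq u u'"
  have "vtx u = vtx u'" by (rule vtx_beq[OF b])
  moreover have "vtx (u @ pw [f ! 0]) = vtx (u' @ pw [f ! 0])" by (rule vtx_beq[OF beq_appR[OF b]])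
  moreover have "vtx (u @ pw [f ! 0, f ! 1]) = vtx (u' @ pw [f ! 0, f ! 1])" by (rule vtx_beq[OF beq_appR[OF b]])
  ultimately show ?thesis unfolding face_def by simp
qed

lemma vtx_conj1: "vtx (u @ xn n @ pw [a]) = vtx (u @ pw [(psi ^^ n) a])"
proof -
  have "vtx (u @ xn n @ pw [a]) = vtx (u @ pw [(psi ^^ n) a] @ xn n)" by (rule vtx_app_beq[OF conj_xn])
  also have "\<dots> = vtx ((u @ pw [(psi ^^ n) a]) @ xn n)" by simp
  also have "\<dots> = vtx (u @ pw [(psi ^^ n) a])" by (rule vtx_xn)
  finally show ?thesis .
qed

lemma vtx_conj2: "vtx (u @ xn n @ pw [a, b]) = vtx (u @ pw [(psi ^^ n) a, (psi ^^ n) b])"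
proof -
  have "xn n @ pw [a, b] = (xn n @ pw [a]) @ pw [b]" by simp
  also have "beq ((xn n @ pw [a]) @ pw [b]) ((pw [(psi ^^ n) a] @ xn n) @ pw [b])" by (rule beq_appR[OF conj_xn])
  also have "(pw [(psi ^^ n) a] @ xn n) @ pw [b] = pw [(psi ^^ n) a] @ (xn n @ pw [b])" by simp
  also have "beq (pw [(psi ^^ n) a] @ (xn n @ pw [b])) (pw [(psi ^^ n) a] @ (pw [(psi ^^ n) b] @ xn n))" by (rule beq_appL[OF conj_xn])
  finally have "beq (xn n @ pw [a, b]) (pw [(psi ^^ n) a, (psi ^^ n) b] @ xn n)" by simp
  then have "vtx (u @ xn n @ pw [a, b]) = vtx (u @ pw [(psi ^^ n) a, (psi ^^ n) b] @ xn n)" by (rule vtx_app_beq)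
  also have "\<dots> = vtx ((u @ pw [(psi ^^ n) a, (psi ^^ n) b]) @ xn n)" by simp
  also have "\<dots> = vtx (u @ pw [(psi ^^ n) a, (psi ^^ n) b])" by (rule vtx_xn)
  finally show ?thesis .
qed

lemma face_xn: "length f \<ge> 2 \<Longrightarrow> face (u @ xn n) f = face u (map (psi ^^ n) f)"
proof -
  assume l: "length f \<ge> 2"
  have "vtx (u @ xn n) = vtx u" by (rule vtx_xn)
  moreover have "vtx ((u @ xn n) @ pw [f ! 0]) = vtx (u @ pw [(psi ^^ n) (f ! 0)])"
    using vtx_conj1[of u n "f ! 0"] by simp
  moreover have "vtx ((u @ xn n) @ pw [f ! 0, f ! 1]) = vtx (u @ pw [(psi ^^ n) (f ! 0), (psi ^^ n) (f ! 1)])"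
    using vtx_conj2[of u n "f ! 0" "f ! 1"] by simp
  moreover have "map (psi ^^ n) f ! 0 = (psi ^^ n) (f ! 0)" "map (psi ^^ n) f ! 1 = (psi ^^ n) (f ! 1)"
  proof -
    obtain a b r where "f = a # b # r" using l by (cases f; cases "tl f") auto
    then show "map (psi ^^ n) f ! 0 = (psi ^^ n) (f ! 0)" "map (psi ^^ n) f ! 1 = (psi ^^ n) (f ! 1)" by simp_all
  qed
  ultimately show ?thesis unfolding face_def by (simp del: pw_def)
qed

lemma face_rot: "f \<in> set factsL \<Longrightarrow> face u f = face (u @ pw [f ! 0]) (rot f)"
proof -
  assume f: "f \<in> set factsL"
  obtain a b c where abc: "f = [a, b, c]" using fl_len[OF f] by blast
  have "vtx ((u @ pw [f ! 0]) @ pw [f ! 1, f ! 2]) = vtx (u @ pw f)"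
    using abc by simp
  also have "\<dots> = vtx (u @ xw)" by (rule vtx_app_beq[OF fl_x[OF f]])
  also have "\<dots> = vtx u" by (rule vtx_xw)
  finally have "vtx ((u @ pw [f ! 0]) @ pw [f ! 1, f ! 2]) = vtx u" .
  then show ?thesis unfolding face_def rot_def using abc by (simp add: insert_commute)
qed

definition rb :: "word \<Rightarrow> gen list \<Rightarrow> nat \<Rightarrow> word" where
  "rb u f j = u @ pw (take j f)"

lemma face_rotj: "f \<in> set factsL \<Longrightarrow> j < 3 \<Longrightarrow> face u f = face (rb u f j) ((rot ^^ j) f)"
proof -
  assume f: "f \<in> set factsL" and j: "j < 3"
  obtain a b c where abc: "f = [a, b, c]" using fl_len[OF f] by blast
  have jc: "j = 0 \<or> j = 1 \<or> j = 2" using j by arith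
  have e0: "face u f = face (rb u f 0) ((rot ^^ 0) f)" by (simp add: rb_def)
  have e1: "face u f = face (rb u f 1) ((rot ^^ 1) f)"
    using face_rot[OF f, of u] abc by (simp add: rb_def)
  have e2: "face u f = face (rb u f 2) ((rot ^^ 2) f)"
  proof -
    have "face u f = face (u @ pw [f ! 0]) (rot f)" by (rule face_rot[OF f])
    also have "\<dots> = face ((u @ pw [f ! 0]) @ pw [rot f ! 0]) (rot (rot f))" by (rule face_rot[OF fl_rot[OF f]])
    also have "(u @ pw [f ! 0]) @ pw [rot f ! 0] = rb u f 2"
      using abc unfolding rb_def rot_def by simp
    finally show ?thesis by (simp add: numeral_2_eq_2)
  qed
  from jc show ?thesis
  proof (elim disjE)
    assume "j = 0" then show ?thesis using e0 by simp
  next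
    assume "j = 1" then show ?thesis using e1 by simp
  next
    assume "j = 2" then show ?thesis using e2 by simp
  qed
qed

lemma vtx_in_face: "f \<in> set factsL \<Longrightarrow> vtx w \<in> face u f \<Longrightarrow> \<exists>j<3. vtx w = vtx (rb u f j)"
proof -
  assume f: "f \<in> set factsL" and w: "vtx w \<in> face u f"
  obtain a b c where abc: "f = [a, b, c]" using fl_len[OF f] by blast
  from w have "vtx w = vtx (rb u f 0) \<or> vtx w = vtx (rb u f 1) \<or> vtx w = vtx (rb u f 2)"
    unfolding face_def rb_def using abc by (simp add: numeral_2_eq_2)
  moreover have "(0::nat) < 3" "(1::nat) < 3" "(2::nat) < 3" by simp_all
  ultimately show ?thesis by blast
qed

lemma SB: "vtx w = vtx w' \<Longrightarrow> \<exists>m<4. \<forall>f. length f \<ge> 2 \<longrightarrow> face w' f = face w (map (psi ^^ m) f)"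
proof -
  assume "vtx w = vtx w'"
  then obtain k where k: "beq (w @ xpow k) w'" by (auto simp: vtx_eq_iff)
  show ?thesis
  proof (cases "k \<ge> 0")
    case True
    define n where "n = nat k"
    have "k = int n" using True unfolding n_def by simp
    then have b: "beq (w @ xn n) w'" using k by (simp add: xpow_pos)
    have "\<forall>f. length f \<ge> 2 \<longrightarrow> face w' f = face w (map (psi ^^ (n mod 4)) f)"
    proof (intro allI impI)
      fix f :: "gen list" assume l: "length f \<ge> 2"
      have "face w' f = face (w @ xn n) f" by (rule face_beq[OF beq_sym[OF b]])
      also have "\<dots> = face w (map (psi ^^ n) f)" by (rule face_xn[OF l])
      finally show "face w' f = face w (map (psi ^^ (n mod 4)) f)" by (simp only: psi_mod[of n])
    qed
    then show ?thesis by (intro exI[of _ "n mod 4"]) simp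
  next
    case False
    define n where "n = nat (- k)"
    have "k = - int n" using False unfolding n_def by simp
    then have b: "beq (w @ yn n) w'" using k by (simp add: xpow_neg)
    have yx: "beq (yn n @ xn n) []"
    proof -
      have "beq (xpow (- int n) @ xpow (int n)) (xpow (- int n + int n))" by (rule xpow_add)
      then show ?thesis by (simp add: xpow_neg xpow_pos)
    qed
    have b2: "beq (w' @ xn n) w"
    proof -
      have "beq (w' @ xn n) ((w @ yn n) @ xn n)" by (rule beq_appR[OF beq_sym[OF b]])
      also have "(w @ yn n) @ xn n = w @ (yn n @ xn n)" by simp
      also have "beq (w @ (yn n @ xn n)) (w @ [])" by (rule beq_appL[OF yx])
      finally show ?thesis by simp
    qed
    define m where "m = (3 * n) mod 4"
    have "\<forall>f. length f \<ge> 2 \<longrightarrow> face w' f = face w (map (psi ^^ m) f)"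
    proof (intro allI impI)
      fix f :: "gen list" assume l: "length f \<ge> 2"
      have "face w (map (psi ^^ m) f) = face (w' @ xn n) (map (psi ^^ m) f)" by (rule face_beq[OF beq_sym[OF b2]])
      also have "\<dots> = face w' (map (psi ^^ n) (map (psi ^^ m) f))" by (rule face_xn) (use l in simp)
      also have "map (psi ^^ n) (map (psi ^^ m) f) = map (psi ^^ (n + m)) f" by (simp add: funpow_add)
      also have "psi ^^ (n + m) = psi ^^ ((n + m) mod 4)" by (rule psi_mod)
      also have "(n + m) mod 4 = 0" unfolding m_def by (simp add: mod_add_right_eq)
      finally show "face w' f = face w (map (psi ^^ m) f)" by simp
    qed
    then show ?thesis by (intro exI[of _ m]) (simp add: m_def)
  qed
qed




lemma nd10: "vtx (h @ pw [a]) \<noteq> vtx h" using nd01 by (metis)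
lemma nd20: "vtx (h @ pw [a, b]) \<noteq> vtx h" using nd02 by (metis)
lemma nd21: "vtx (h @ pw [b, c]) \<noteq> vtx (h @ pw [a])" using nd12 by (metis)

lemma face_inj:
  assumes f: "f \<in> set factsL" and g: "g \<in> set factsL" and e: "face u f = face u g"
  shows "f = g"
proof -
  obtain a b c where abc: "f = [a, b, c]" using fl_len[OF f] by blast
  obtain a' b' c' where abc': "g = [a', b', c']" using fl_len[OF g] by blast
  have fu: "face u f = {vtx u, vtx (u @ pw [a]), vtx (u @ pw [a, b])}" using abc by (simp add: face_def)
  have gu: "face u g = {vtx u, vtx (u @ pw [a']), vtx (u @ pw [a', b'])}" using abc' by (simp add: face_def)
  have "vtx (u @ pw [a]) \<in> face u g" using e fu by blast
  then have "vtx (u @ pw [a]) = vtx (u @ pw [a'])" using gu nd10[of u a] nd12[of u a a' b'] by blast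
  then have aa: "a = a'" by (rule atom_eq)
  have "vtx (u @ pw [a, b]) \<in> face u g" using e fu by blast
  then have "vtx (u @ pw [a, b]) = vtx (u @ pw [a', b'])" using gu nd20[of u a b] nd21[of u a b a'] by blast
  then have "beq (pw [a, b]) (pw [a', b'])" by (rule pair_eq)
  then have "beq ([(a, True)] @ [(b, True)]) ([(a, True)] @ [(b', True)])" using aa by simp
  then have "beq [(b, True)] [(b', True)]" by (rule beq_cancelL)
  then have "b = b'" by (rule atom_inj)
  then show "f = g" using fl_det[OF f g] abc abc' aa by simp
qed

definition edg :: "word \<Rightarrow> gen \<Rightarrow> vertex set" where
  "edg v t = {vtx v, vtx (v @ pw [t])}"

lemma edg_sub: "f \<in> set factsL \<Longrightarrow> edg v (f ! 0) \<subseteq> face v f"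
  unfolding edg_def face_def by auto

lemma L4:
  assumes T: "T \<in> Xfaces" and sub: "edg v t \<subseteq> T"
  shows "\<exists>f\<in>set factsL. f ! 0 = t \<and> T = face v f"
proof -
  obtain g f0 where f0: "f0 \<in> set factsL" "T = face g f0" using T Xfaces_iff by blast
  have "vtx v \<in> face g f0" using sub f0(2) unfolding edg_def by blast
  then obtain j where j: "j < 3" "vtx v = vtx (rb g f0 j)" using vtx_in_face[OF f0(1)] by blast
  obtain m where m: "\<forall>f. length f \<ge> 2 \<longrightarrow> face (rb g f0 j) f = face v (map (psi ^^ m) f)"
    using SB[OF j(2)] by blast
  define f1 where "f1 = map (psi ^^ m) ((rot ^^ j) f0)"
  have f1f: "f1 \<in> set factsL" unfolding f1_def by (rule fl_psin[OF fl_rotn[OF f0(1)]])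
  have "length ((rot ^^ j) f0) \<ge> 2" using fl_len[OF fl_rotn[OF f0(1)], of j] by (metis One_nat_def length_Cons list.size(3) numeral_2_eq_2 le_add2 plus_1_eq_Suc numeral_3_eq_3 Suc_le_mono)
  then have Tf1: "T = face v f1" using m f0(2) face_rotj[OF f0(1) j(1)] unfolding f1_def by simp
  obtain a b c where abc: "f1 = [a, b, c]" using fl_len[OF f1f] by blast
  have "vtx (v @ pw [t]) \<in> face v f1" using sub Tf1 unfolding edg_def by blast
  then have "vtx (v @ pw [t]) = vtx (v @ pw [a])"
    using abc nd10[of v t] nd12[of v t a b] unfolding face_def by auto
  then have "t = a" by (rule atom_eq)
  then have "f1 ! 0 = t" using abc by simp
  then show ?thesis using f1f Tf1 by blast
qed

lemma set_filter_eq: "{f \<in> set xs. P f} = set (filter P xs)" by auto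

lemma count_first: "card {f \<in> set factsL. f ! 0 = t} = (if t = B \<or> t = D then 2 else 3)"
  unfolding set_filter_eq by (cases t) (simp_all add: factsL_def)

lemma valence_edg: "valence (edg v t) = card {f \<in> set factsL. f ! 0 = t}"
proof -
  have "{T \<in> Xfaces. edg v t \<subseteq> T} = face v ` {f \<in> set factsL. f ! 0 = t}"
  proof
    show "{T \<in> Xfaces. edg v t \<subseteq> T} \<subseteq> face v ` {f \<in> set factsL. f ! 0 = t}"
      using L4 by blast
    show "face v ` {f \<in> set factsL. f ! 0 = t} \<subseteq> {T \<in> Xfaces. edg v t \<subseteq> T}"
      using face_in edg_sub by fastforce
  qed
  moreover have "inj_on (face v) {f \<in> set factsL. f ! 0 = t}"
    by (rule inj_onI) (use face_inj in blast)
  ultimately show ?thesis unfolding valence_def by (simp add: card_image)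
qed

lemma vtx_fact: "f \<in> set factsL \<Longrightarrow> vtx (u @ pw f) = vtx u"
proof -
  assume f: "f \<in> set factsL"
  have "vtx (u @ pw f) = vtx (u @ xw)" by (rule vtx_app_beq[OF fl_x[OF f]])
  also have "\<dots> = vtx u" by (rule vtx_xw)
  finally show ?thesis .
qed

lemma two_sub: "card e = 2 \<Longrightarrow> e \<subseteq> {p, q, r} \<Longrightarrow> e = {p, q} \<or> e = {q, r} \<or> e = {p, r}"
proof -
  assume c: "card e = 2" and s: "e \<subseteq> {p, q, r}"
  obtain x y where xy: "e = {x, y}" "x \<noteq> y" using c by (meson card_2_iff)
  then show ?thesis using s by auto
qed

lemma EC:
  assumes f: "f \<in> set factsL" and s: "e \<subseteq> face u f" and c: "card e = 2"
  shows "\<exists>v t. e = edg v t"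
proof -
  obtain a b cc where abc: "f = [a, b, cc]" using fl_len[OF f] by blast
  have fu: "face u f = {vtx u, vtx (u @ pw [a]), vtx (u @ pw [a, b])}" using abc by (simp add: face_def)
  have x: "vtx ((u @ pw [a, b]) @ pw [cc]) = vtx u" using vtx_fact[OF f, of u] abc by simp
  from two_sub[OF c s[unfolded fu]] show ?thesis
  proof (elim disjE)
    assume "e = {vtx u, vtx (u @ pw [a])}" then show ?thesis unfolding edg_def by blast
  next
    assume "e = {vtx (u @ pw [a]), vtx (u @ pw [a, b])}"
    then have "e = edg (u @ pw [a]) b" unfolding edg_def by simp
    then show ?thesis by blast
  next
    assume "e = {vtx u, vtx (u @ pw [a, b])}"
    then have "e = edg (u @ pw [a, b]) cc" unfolding edg_def using x by auto
    then show ?thesis by blast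
  qed
qed

lemma fin_pair: "\<forall>f1\<in>set factsL. \<forall>f2\<in>set factsL. f1 \<noteq> f2 \<and> f1 ! 0 = f2 ! 0 \<longrightarrow>
   (f1 ! 0 = B \<longrightarrow> {f1, f2} = {[B,C,A], [B,A,C]}) \<and> (f1 ! 0 = D \<longrightarrow> {f1, f2} = {[D,E,F], [D,F,E]})"
  unfolding factsL_def by (simp add: insert_commute)

lemma LOZ:
  assumes "is_lozenge R"
  shows "\<exists>v. R = {face v [B,C,A], face v [B,A,C]}"
proof -
  obtain T1 T2 where T: "T1 \<in> Xfaces" "T2 \<in> Xfaces" "T1 \<noteq> T2" "R = {T1, T2}"
    "card (T1 \<inter> T2) = 2" "valence (T1 \<inter> T2) = 2"
    using assms unfolding is_lozenge_def by blast
  obtain g f where gf: "f \<in> set factsL" "T1 = face g f" using T(1) Xfaces_iff by blast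
  obtain v t where vt: "T1 \<inter> T2 = edg v t" using EC[OF gf(1) _ T(5)] gf(2) by blast
  have "card {f \<in> set factsL. f ! 0 = t} = 2" using T(6) vt valence_edg by simp
  then have tBD: "t = B \<or> t = D" using count_first[of t] by (simp split: if_splits)
  obtain f1 where f1: "f1 \<in> set factsL" "f1 ! 0 = t" "T1 = face v f1" using L4[OF T(1)] vt by blast
  obtain f2 where f2: "f2 \<in> set factsL" "f2 ! 0 = t" "T2 = face v f2" using L4[OF T(2)] vt by blast
  have ne: "f1 \<noteq> f2" using T(3) f1(3) f2(3) by blast
  have fp: "f1 \<noteq> f2 \<and> f1 ! 0 = f2 ! 0 \<longrightarrow>
   (f1 ! 0 = B \<longrightarrow> {f1, f2} = {[B,C,A], [B,A,C]}) \<and> (f1 ! 0 = D \<longrightarrow> {f1, f2} = {[D,E,F], [D,F,E]})"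
    using fin_pair f1(1) f2(1) by blast
  have pr: "(t = B \<longrightarrow> {f1, f2} = {[B,C,A], [B,A,C]}) \<and> (t = D \<longrightarrow> {f1, f2} = {[D,E,F], [D,F,E]})"
    using fp ne f1(2) f2(2) by simp
  have R: "R = face v ` {f1, f2}" using T(4) f1(3) f2(3) by simp
  show ?thesis
  proof (cases "t = B")
    case True
    then show ?thesis using R pr by (intro exI[of _ v]) simp
  next
    case False
    then have t: "t = D" using tBD by simp
    define v' where "v' = v @ inv_word xw"
    have bv: "beq (v' @ xn 1) v"
    proof -
      have "v' @ xn 1 = v @ (inv_word xw @ xw)" by (simp add: v'_def xn_def)
      also have "beq (v @ (inv_word xw @ xw)) (v @ [])" by (rule beq_appL[OF inv_left])
      finally show ?thesis by simp
    qed
    have fv: "face v h = face v' (map psi h)" if "length h \<ge> 2" for h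
    proof -
      have "face v h = face (v' @ xn 1) h" by (rule face_beq[OF beq_sym[OF bv]])
      also have "\<dots> = face v' (map (psi ^^ 1) h)" by (rule face_xn[OF that])
      finally show ?thesis by simp
    qed
    have "R = face v ` {[D,E,F], [D,F,E]}" using R pr t by simp
    also have "\<dots> = {face v' [B,C,A], face v' [B,A,C]}" using fv[of "[D,E,F]"] fv[of "[D,F,E]"] by simp
    finally show ?thesis by blast
  qed
qed

lemma int3: "r \<noteq> p \<Longrightarrow> r \<noteq> q \<Longrightarrow> r \<noteq> r' \<Longrightarrow> r' \<noteq> p \<Longrightarrow> r' \<noteq> q \<Longrightarrow> {p, q, r} \<inter> {p, q, r'} = {p, q}"
  by auto

lemma LOZ_intro:
  assumes f: "f \<in> set factsL" and g: "g \<in> set factsL" and fg: "f \<noteq> g" and fg0: "f ! 0 = g ! 0"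
    and t: "f ! 0 = B \<or> f ! 0 = D"
  shows "is_lozenge {face v f, face v g}"
proof -
  obtain t b c where abc: "f = [t, b, c]" using fl_len[OF f] by blast
  have "g = [t, g ! 1, g ! 2]" using fl_len[OF g] fg0 abc by simp
  then obtain b' c' where abc': "g = [t, b', c']" by blast
  have bb: "b \<noteq> b'" using fl_det[OF f g] fg abc abc' by auto
  have r: "vtx (v @ pw [t, b]) \<noteq> vtx (v @ pw [t, b'])"
  proof
    assume "vtx (v @ pw [t, b]) = vtx (v @ pw [t, b'])"
    then have "beq (pw [t, b]) (pw [t, b'])" by (rule pair_eq)
    then have "beq ([(t, True)] @ [(b, True)]) ([(t, True)] @ [(b', True)])" by simp
    then have "beq [(b, True)] [(b', True)]" by (rule beq_cancelL)
    then show False using bb atom_inj by blast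
  qed
  have fu: "face v f = {vtx v, vtx (v @ pw [t]), vtx (v @ pw [t, b])}" using abc by (simp add: face_def)
  have gu: "face v g = {vtx v, vtx (v @ pw [t]), vtx (v @ pw [t, b'])}" using abc' by (simp add: face_def)
  have int: "face v f \<inter> face v g = edg v t"
    unfolding fu gu edg_def by (rule int3[OF nd20[of v t b] nd21[of v t b t] r nd20[of v t b'] nd21[of v t b' t]])
  have c2: "card (edg v t) = 2" unfolding edg_def using nd01[of v t] by simp
  have tt: "t = B \<or> t = D" using t abc by simp
  have v2: "valence (edg v t) = 2" unfolding valence_edg count_first using tt by simp
  have ne: "face v f \<noteq> face v g" using face_inj[OF f g] fg by blast
  show ?thesis unfolding is_lozenge_def
    apply (rule exI[of _ "face v f"], rule exI[of _ "face v g"])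
    using face_in[OF f] face_in[OF g] ne by (simp only: int c2 v2 simp_thms)
qed

definition hbd :: "gen list \<Rightarrow> bool" where
  "hbd f = (B \<in> set f \<or> D \<in> set f)"

lemma psi_B: "psi x = B \<longleftrightarrow> x = D" by (cases x) auto
lemma psi_D: "psi x = D \<longleftrightarrow> x = B" by (cases x) auto

lemma psi_B': "B = psi x \<longleftrightarrow> x = D" by (cases x) auto
lemma psi_D': "D = psi x \<longleftrightarrow> x = B" by (cases x) auto

lemma memB: "B \<in> set (map psi f) \<longleftrightarrow> D \<in> set f"
  by (induction f) (auto simp: psi_B psi_B')
lemma memD: "D \<in> set (map psi f) \<longleftrightarrow> B \<in> set f"
  by (induction f) (auto simp: psi_D psi_D')

lemma hbd_psi: "hbd (map psi f) = hbd f"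
  unfolding hbd_def by (simp only: memB memD) blast

lemma hbd_psin: "hbd (map (psi ^^ m) f) = hbd f"
proof (induction m)
  case 0 then show ?case by simp
next
  case (Suc m)
  have "map (psi ^^ Suc m) f = map psi (map (psi ^^ m) f)" by (simp add: comp_def)
  then show ?case using hbd_psi[of "map (psi ^^ m) f"] Suc by (simp add: comp_def)
qed

lemma hbd_rot_all: "\<forall>f\<in>set factsL. hbd (rot f) = hbd f"
  unfolding factsL_def rot_def hbd_def by simp

lemma hbd_rotn: "f \<in> set factsL \<Longrightarrow> hbd ((rot ^^ j) f) = hbd f"
proof (induction j)
  case 0 then show ?case by simp
next
  case (Suc j)
  then show ?case using hbd_rot_all fl_rotn[OF Suc.prems, of j] by simp
qed

lemma len_fact: "f \<in> set factsL \<Longrightarrow> length f \<ge> 2"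
  using fl_len by (metis One_nat_def length_Cons list.size(3) numeral_2_eq_2 le_add2 plus_1_eq_Suc Suc_le_mono)

lemma face_conj:
  assumes f: "f \<in> set factsL" and w: "vtx w \<in> face v f"
  shows "\<exists>j<3. \<exists>m<4. vtx w = vtx (rb v f j) \<and> (\<forall>h. length h \<ge> 2 \<longrightarrow> face (rb v f j) h = face w (map (psi ^^ m) h))"
proof -
  obtain j where j: "j < 3" "vtx w = vtx (rb v f j)" using vtx_in_face[OF f w] by blast
  obtain m where m: "m < 4" "\<forall>h. length h \<ge> 2 \<longrightarrow> face (rb v f j) h = face w (map (psi ^^ m) h)"
    using SB[OF j(2)] by blast
  show ?thesis using j m by blast
qed

lemma HB:
  assumes f: "f \<in> set factsL" and g: "g \<in> set factsL" and e: "face v f = face w g"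
  shows "hbd f = hbd g"
proof -
  have "vtx w \<in> face w g" unfolding face_def by simp
  then have "vtx w \<in> face v f" using e by simp
  then obtain j m where jm: "j < 3" "m < 4"
    "\<forall>h. length h \<ge> 2 \<longrightarrow> face (rb v f j) h = face w (map (psi ^^ m) h)"
    using face_conj[OF f] by blast
  have rf: "(rot ^^ j) f \<in> set factsL" by (rule fl_rotn[OF f])
  have "face w g = face (rb v f j) ((rot ^^ j) f)" using e face_rotj[OF f jm(1)] by simp
  also have "\<dots> = face w (map (psi ^^ m) ((rot ^^ j) f))" using jm(3) len_fact[OF rf] by simp
  finally have "g = map (psi ^^ m) ((rot ^^ j) f)" by (rule face_inj[OF g fl_psin[OF rf]])
  then show ?thesis using hbd_psin hbd_rotn[OF f] by simp
qed

lemma fin_tri: "\<forall>f\<in>set factsL. hbd f \<longrightarrow> (\<exists>j\<in>{0,1,2::nat}. \<exists>g\<in>set factsL. g \<noteq> (rot ^^ j) f \<and> g ! 0 = ((rot ^^ j) f) ! 0 \<and>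
   (((rot ^^ j) f) ! 0 = B \<or> ((rot ^^ j) f) ! 0 = D))"
  unfolding factsL_def hbd_def by (simp add: rot_def numeral_2_eq_2)

lemma BCA_fact: "[B,C,A] \<in> set factsL" and BAC_fact: "[B,A,C] \<in> set factsL"
  unfolding factsL_def by simp_all

lemma TRI:
  assumes f: "f \<in> set factsL"
  shows "is_triangle (face v f) \<longleftrightarrow> \<not> hbd f"
proof
  assume tr: "is_triangle (face v f)"
  show "\<not> hbd f"
  proof
    assume h: "hbd f"
    obtain j g where jg: "j \<in> {0,1,2::nat}" "g \<in> set factsL" "g \<noteq> (rot ^^ j) f" "g ! 0 = ((rot ^^ j) f) ! 0"
      "((rot ^^ j) f) ! 0 = B \<or> ((rot ^^ j) f) ! 0 = D"
      using fin_tri f h by blast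
    have j3: "j < 3" using jg(1) by auto
    have "is_lozenge {face (rb v f j) ((rot ^^ j) f), face (rb v f j) g}"
      by (rule LOZ_intro[OF fl_rotn[OF f] jg(2) jg(3)[symmetric] jg(4)[symmetric] jg(5)])
    moreover have "face v f \<in> {face (rb v f j) ((rot ^^ j) f), face (rb v f j) g}"
      using face_rotj[OF f j3] by simp
    ultimately show False using tr unfolding is_triangle_def by blast
  qed
next
  assume h: "\<not> hbd f"
  have "\<not> (\<exists>R. is_lozenge R \<and> face v f \<in> R)"
  proof
    assume "\<exists>R. is_lozenge R \<and> face v f \<in> R"
    then obtain R where R: "is_lozenge R" "face v f \<in> R" by blast
    obtain w where w: "R = {face w [B,C,A], face w [B,A,C]}" using LOZ[OF R(1)] by blast
    have "face v f = face w [B,C,A] \<or> face v f = face w [B,A,C]" using R(2) w by simp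
    then have "hbd f = hbd [B,C,A] \<or> hbd f = hbd [B,A,C]" using HB[OF f BCA_fact] HB[OF f BAC_fact] by blast
    then show False using h unfolding hbd_def by simp
  qed
  then show "is_triangle (face v f)" unfolding is_triangle_def using face_in[OF f] by blast
qed




lemma PG:
  assumes vd: "\<forall>a\<in>set us. \<forall>b\<in>set us. a \<noteq> b \<longrightarrow> vdiff a b" and dist: "distinct us" and l: "length us = 6"
    and P: "P = {{vtx (h @ pw (us ! 0)), vtx (h @ pw (us ! 1)), vtx (h @ pw (us ! 3))},
                 {vtx (h @ pw (us ! 1)), vtx (h @ pw (us ! 3)), vtx (h @ pw (us ! 4))},
                 {vtx (h @ pw (us ! 1)), vtx (h @ pw (us ! 2)), vtx (h @ pw (us ! 4))},
                 {vtx (h @ pw (us ! 2)), vtx (h @ pw (us ! 4)), vtx (h @ pw (us ! 5))}}"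
  shows "is_parallelogram P"
proof -
  define \<phi> where "\<phi> i = vtx (h @ pw (us ! i))" for i
  have inj: "inj_on \<phi> {0..5}"
  proof (rule inj_onI)
    fix i j assume i: "i \<in> {0..5::nat}" and j: "j \<in> {0..5::nat}" and e: "\<phi> i = \<phi> j"
    have il: "i < length us" "j < length us" using i j l by auto
    have "us ! i = us ! j"
    proof (rule ccontr)
      assume "us ! i \<noteq> us ! j"
      then have "vdiff (us ! i) (us ! j)" using vd il by auto
      then show False using vdiff_neq e unfolding \<phi>_def by blast
    qed
    then show "i = j" using dist il nth_eq_iff_index_eq by blast
  qed
  show ?thesis unfolding is_parallelogram_def
    by (rule exI[of _ \<phi>]) (use inj in \<open>simp add: P \<phi>_def\<close>)
qed

lemma xpow_m1: "xpow (-1) = inv_word xw" by (simp add: xpow_def)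
lemma xpow_2: "xpow 2 = xw @ xw" by (simp add: xpow_def numeral_eq_Suc)
lemma xpow_m2: "xpow (-2) = inv_word xw @ inv_word xw" by (simp add: xpow_def numeral_eq_Suc)
lemma inv_xw: "inv_word xw = [(C,False),(A,False),(B,False)]" by (simp add: inv_word_def xw_def)
lemma gsw_tab: "gsw A 0 = 1" "gsw A 1 = 0" "gsw A 2 = 2" "gsw A 3 = 3" "gsw E 0 = 0" "gsw E 1 = 2" "gsw E 2 = 1" "gsw E 3 = 3" "gsw B 0 = 2" "gsw B 1 = 1" "gsw B 2 = 0" "gsw B 3 = 3" "gsw C 0 = 0" "gsw C 1 = 1" "gsw C 2 = 3" "gsw C 3 = 2" "gsw F 0 = 3" "gsw F 1 = 1" "gsw F 2 = 2" "gsw F 3 = 0" "gsw D 0 = 0" "gsw D 1 = 3" "gsw D 2 = 2" "gsw D 3 = 1"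
  by (simp_all add: tsw_def)
lemma gsw_tab1: "gsw A (Suc 0) = 0" "gsw E (Suc 0) = 2" "gsw B (Suc 0) = 1" "gsw C (Suc 0) = 1" "gsw F (Suc 0) = 1" "gsw D (Suc 0) = 3"
  by (simp_all add: tsw_def)
lemma xpow_1': "xpow 1 = [(B,True),(A,True),(C,True)]" by (simp add: xpow_1 xw_def)
lemma xpow_m1': "xpow (-1) = [(C,False),(A,False),(B,False)]" by (simp add: xpow_m1 inv_xw)
lemma xpow_2': "xpow 2 = [(B,True),(A,True),(C,True),(B,True),(A,True),(C,True)]" by (simp add: xpow_2 xw_def)
lemma xpow_m2': "xpow (-2) = [(C,False),(A,False),(B,False),(C,False),(A,False),(B,False)]" by (simp add: xpow_m2 inv_xw)
lemma pf_app_Cons: "pf ((s, b) # w) n = gsw s (pf w n)" by simp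
lemma pf_app_Nil: "pf [] n = n" by simp
lemma map4: "map f [0,1,2,3] = [f 0, f 1, f 2, f 3]" by simp
lemmas vd_simps = vdiff_def xpow_1' xpow_m1' xpow_2' xpow_m2' gsw_tab gsw_tab1

lemma vdiff_test: "\<forall>a\<in>set [[B,A], [B], [B,C,D], [], [B,C], [B,C,D,E]]. \<forall>b\<in>set [[B,A], [B], [B,C,D], [], [B,C], [B,C,D,E]]. a \<noteq> b \<longrightarrow> vdiff a b"
  by (simp add: vd_simps del: pf_Cons pf_append gsw.simps add: pf_app_Cons pf_app_Nil)

lemma fin_G2: "\<forall>f1\<in>set [[B,C,A],[B,A,C]]. \<forall>f2\<in>set [[B,C,A],[B,A,C]]. \<forall>j\<in>set [0,1,2::nat]. \<forall>m\<in>set [0,1,2,3::nat].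
  f2 = map (psi ^^ m) ((rot ^^ j) f1) \<longrightarrow> j = 0 \<and> {map (psi ^^ m) [B,C,A], map (psi ^^ m) [B,A,C]} = {[B,C,A],[B,A,C]}"
  by (simp add: rot_def numeral_eq_Suc doubleton_eq_iff)

lemma lt3: "j < (3::nat) \<Longrightarrow> j \<in> set [0,1,2]" by auto
lemma lt4: "m < (4::nat) \<Longrightarrow> m \<in> set [0,1,2,3]" by auto

lemma G2:
  assumes R: "is_lozenge R" and R2: "is_lozenge R2" and T: "T \<in> R" "T \<in> R2"
  shows "R = R2"
proof -
  obtain w where w: "R = {face w [B,C,A], face w [B,A,C]}" using LOZ[OF R] by blast
  obtain w2 where w2: "R2 = {face w2 [B,C,A], face w2 [B,A,C]}" using LOZ[OF R2] by blast
  obtain f1 where f1: "f1 \<in> set [[B,C,A],[B,A,C]]" "T = face w f1" using T(1) w by auto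
  obtain f2 where f2: "f2 \<in> set [[B,C,A],[B,A,C]]" "T = face w2 f2" using T(2) w2 by auto
  have f1f: "f1 \<in> set factsL" and f2f: "f2 \<in> set factsL" using f1(1) f2(1) BCA_fact BAC_fact by auto
  have "vtx w2 \<in> face w2 f2" unfolding face_def by simp
  then have "vtx w2 \<in> face w f1" using f1(2) f2(2) by simp
  then obtain j m where jm: "j < 3" "m < 4" "vtx w2 = vtx (rb w f1 j)"
    "\<forall>h. length h \<ge> 2 \<longrightarrow> face (rb w f1 j) h = face w2 (map (psi ^^ m) h)"
    using face_conj[OF f1f] by blast
  have rf: "(rot ^^ j) f1 \<in> set factsL" by (rule fl_rotn[OF f1f])
  have "face w2 f2 = face (rb w f1 j) ((rot ^^ j) f1)" using f1(2) f2(2) face_rotj[OF f1f jm(1)] by simp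
  also have "\<dots> = face w2 (map (psi ^^ m) ((rot ^^ j) f1))" using jm(4) len_fact[OF rf] by simp
  finally have "f2 = map (psi ^^ m) ((rot ^^ j) f1)" by (rule face_inj[OF f2f fl_psin[OF rf]])
  then have j0: "j = 0" and se: "{map (psi ^^ m) [B,C,A], map (psi ^^ m) [B,A,C]} = {[B,C,A],[B,A,C]}"
    using fin_G2 f1(1) f2(1) lt3[OF jm(1)] lt4[OF jm(2)] by blast+
  have fw: "face w h = face w2 (map (psi ^^ m) h)" if "length h \<ge> 2" for h
    using jm(4) that j0 by (simp add: rb_def)
  have "R = face w2 ` {map (psi ^^ m) [B,C,A], map (psi ^^ m) [B,A,C]}"
    using w fw[of "[B,C,A]"] fw[of "[B,A,C]"] by simp
  also have "\<dots> = R2" using se w2 by simp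
  finally show ?thesis .
qed

lemma loz_faces: "is_lozenge R \<Longrightarrow> T \<in> R \<Longrightarrow> T \<in> Xfaces"
  unfolding is_lozenge_def by auto

lemma loz_card: "is_lozenge R \<Longrightarrow> \<exists>T1 T2. R = {T1, T2}"
  unfolding is_lozenge_def by auto

lemma CASE:
  assumes lozR: "is_lozenge R"
    and e: "e = edg v t"
    and ff: "{f \<in> set factsL. f ! 0 = t} = {f1, f2, f3}"
    and f1R: "face v f1 \<in> R"
    and notboth: "\<not> (\<forall>T\<in>R. e \<subseteq> T)"
    and h1: "hbd f1" and h2: "\<not> hbd f2" and h3: "hbd f3"
    and f13: "f1 \<noteq> f3"
    and lozR': "is_lozenge R'" and f3R': "face v f3 \<in> R'" and par: "is_parallelogram (R \<union> R')"
  shows "(\<exists>!T. is_triangle T \<and> e \<subseteq> T) \<and>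
         (\<exists>R'. is_lozenge R' \<and> R' \<noteq> R \<and> (\<exists>T\<in>R'. e \<subseteq> T) \<and> is_parallelogram (R \<union> R') \<and>
            (\<forall>R''. is_lozenge R'' \<and> R'' \<noteq> R \<and> (\<exists>T\<in>R''. e \<subseteq> T) \<longrightarrow> R'' = R'))"
proof -
  have m1: "f1 \<in> {f \<in> set factsL. f ! 0 = t}" "f2 \<in> {f \<in> set factsL. f ! 0 = t}"
     "f3 \<in> {f \<in> set factsL. f ! 0 = t}" unfolding ff by simp_all
  have fs: "f1 \<in> set factsL" "f2 \<in> set factsL" "f3 \<in> set factsL"
    "f1 ! 0 = t" "f2 ! 0 = t" "f3 ! 0 = t" using m1 by simp_all
  have sub: "e \<subseteq> face v f" if a: "f \<in> set factsL" and b: "f ! 0 = t" for f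
  proof -
    have "edg v (f ! 0) \<subseteq> face v f" by (rule edg_sub[OF a])
    then show ?thesis using b e by simp
  qed
  have faces: "T = face v f1 \<or> T = face v f2 \<or> T = face v f3" if a1: "T \<in> Xfaces" and a2: "e \<subseteq> T" for T
  proof -
    obtain f where "f \<in> set factsL" "f ! 0 = t" "T = face v f" using L4[OF a1] a2 e by blast
    then have "f \<in> {f1, f2, f3}" unfolding ff[symmetric] by simp
    then show ?thesis using \<open>T = face v f\<close> by auto
  qed
  have tri1: "\<not> is_triangle (face v f1)" using TRI[OF fs(1)] h1 by simp
  have tri2: "is_triangle (face v f2)" using TRI[OF fs(2)] h2 by simp
  have tri3: "\<not> is_triangle (face v f3)" using TRI[OF fs(3)] h3 by simp
  have part1: "\<exists>!T. is_triangle T \<and> e \<subseteq> T"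
  proof (rule ex1I[of _ "face v f2"])
    show "is_triangle (face v f2) \<and> e \<subseteq> face v f2" using tri2 sub[OF fs(2) fs(5)] by simp
  next
    fix T assume a: "is_triangle T \<and> e \<subseteq> T"
    then have "T \<in> Xfaces" unfolding is_triangle_def by simp
    then show "T = face v f2" using faces a tri1 tri3 by blast
  qed
  have ne13: "face v f1 \<noteq> face v f3" using face_inj[OF fs(1) fs(3)] f13 by blast
  have R'R: "R' \<noteq> R"
  proof
    assume eq: "R' = R"
    obtain T0 where T0: "T0 \<in> R" "\<not> e \<subseteq> T0" using notboth by blast
    obtain T1 T2 where R12: "R = {T1, T2}" using loz_card[OF lozR] by blast
    have "face v f3 \<in> R" using eq f3R' by simp
    moreover have "T0 \<noteq> face v f1" "T0 \<noteq> face v f3"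
      using T0(2) sub[OF fs(1) fs(4)] sub[OF fs(3) fs(6)] by auto
    ultimately show False using f1R T0(1) R12 ne13 by auto
  qed
  have part2: "\<forall>R''. is_lozenge R'' \<and> R'' \<noteq> R \<and> (\<exists>T\<in>R''. e \<subseteq> T) \<longrightarrow> R'' = R'"
  proof (intro allI impI)
    fix R'' assume a: "is_lozenge R'' \<and> R'' \<noteq> R \<and> (\<exists>T\<in>R''. e \<subseteq> T)"
    then obtain T where T: "T \<in> R''" "e \<subseteq> T" by blast
    have "T \<in> Xfaces" by (rule loz_faces[OF _ T(1)]) (use a in blast)
    then have "T = face v f1 \<or> T = face v f2 \<or> T = face v f3" using faces T(2) by blast
    then show "R'' = R'"
    proof (elim disjE)
      assume "T = face v f1"
      then have "R = R''" using G2[OF lozR _ f1R] a T(1) by blast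
      then show ?thesis using a by blast
    next
      assume "T = face v f2"
      then show ?thesis using tri2 a T(1) unfolding is_triangle_def by blast
    next
      assume "T = face v f3"
      then have "R' = R''" using G2[OF lozR' _ f3R'] a T(1) by blast
      then show ?thesis by simp
    qed
  qed
  have ex: "\<exists>T\<in>R'. e \<subseteq> T" using f3R' sub[OF fs(3) fs(6)] by blast
  show ?thesis
    apply (rule conjI[OF part1])
    apply (rule exI[of _ R'])
    apply (intro conjI)
    apply (rule lozR')
    apply (rule R'R)
    apply (rule ex)
    apply (rule par)
    apply (rule part2)
    done
qed




lemma mem_facts: "[A,C,D] \<in> set factsL" "[A,D,E] \<in> set factsL" "[A,E,C] \<in> set factsL" "[B,A,C] \<in> set factsL"
  "[B,C,A] \<in> set factsL" "[C,A,D] \<in> set factsL" "[C,D,F] \<in> set factsL" "[C,F,A] \<in> set factsL"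
  "[D,E,F] \<in> set factsL" "[D,F,E] \<in> set factsL"
  unfolding factsL_def by simp_all

lemma ffC: "{f \<in> set factsL. f ! 0 = C} = {[C,A,D],[C,F,A],[C,D,F]}"
  unfolding set_filter_eq factsL_def by (simp add: insert_commute)
lemma ffA: "{f \<in> set factsL. f ! 0 = A} = {[A,D,E],[A,E,C],[A,C,D]}"
  unfolding set_filter_eq factsL_def by (simp add: insert_commute)

lemma vd_e1_1: "vdiff [B,A] [B]" by (simp add: vd_simps del: pf_Cons pf_append gsw.simps add: pf_app_Cons pf_app_Nil)
lemma vd_e1_2: "vdiff [B,A] [B,C,D]" by (simp add: vd_simps del: pf_Cons pf_append gsw.simps add: pf_app_Cons pf_app_Nil)
lemma vd_e1_3: "vdiff [B,A] []" by (simp add: vd_simps del: pf_Cons pf_append gsw.simps add: pf_app_Cons pf_app_Nil)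
lemma vd_e1_4: "vdiff [B,A] [B,C]" by (simp add: vd_simps del: pf_Cons pf_append gsw.simps add: pf_app_Cons pf_app_Nil)
lemma vd_e1_5: "vdiff [B,A] [B,C,D,E]" by (simp add: vd_simps del: pf_Cons pf_append gsw.simps add: pf_app_Cons pf_app_Nil)
lemma vd_e1_6: "vdiff [B] [B,A]" by (simp add: vd_simps del: pf_Cons pf_append gsw.simps add: pf_app_Cons pf_app_Nil)
lemma vd_e1_7: "vdiff [B] [B,C,D]" by (simp add: vd_simps del: pf_Cons pf_append gsw.simps add: pf_app_Cons pf_app_Nil)
lemma vd_e1_8: "vdiff [B] []" by (simp add: vd_simps del: pf_Cons pf_append gsw.simps add: pf_app_Cons pf_app_Nil)
lemma vd_e1_9: "vdiff [B] [B,C]" by (simp add: vd_simps del: pf_Cons pf_append gsw.simps add: pf_app_Cons pf_app_Nil)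
lemma vd_e1_10: "vdiff [B] [B,C,D,E]" by (simp add: vd_simps del: pf_Cons pf_append gsw.simps add: pf_app_Cons pf_app_Nil)
lemma vd_e1_11: "vdiff [B,C,D] [B,A]" by (simp add: vd_simps del: pf_Cons pf_append gsw.simps add: pf_app_Cons pf_app_Nil)
lemma vd_e1_12: "vdiff [B,C,D] [B]" by (simp add: vd_simps del: pf_Cons pf_append gsw.simps add: pf_app_Cons pf_app_Nil)
lemma vd_e1_13: "vdiff [B,C,D] []" by (simp add: vd_simps del: pf_Cons pf_append gsw.simps add: pf_app_Cons pf_app_Nil)
lemma vd_e1_14: "vdiff [B,C,D] [B,C]" by (simp add: vd_simps del: pf_Cons pf_append gsw.simps add: pf_app_Cons pf_app_Nil)
lemma vd_e1_15: "vdiff [B,C,D] [B,C,D,E]" by (simp add: vd_simps del: pf_Cons pf_append gsw.simps add: pf_app_Cons pf_app_Nil)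
lemma vd_e1_16: "vdiff [] [B,A]" by (simp add: vd_simps del: pf_Cons pf_append gsw.simps add: pf_app_Cons pf_app_Nil)
lemma vd_e1_17: "vdiff [] [B]" by (simp add: vd_simps del: pf_Cons pf_append gsw.simps add: pf_app_Cons pf_app_Nil)
lemma vd_e1_18: "vdiff [] [B,C,D]" by (simp add: vd_simps del: pf_Cons pf_append gsw.simps add: pf_app_Cons pf_app_Nil)
lemma vd_e1_19: "vdiff [] [B,C]" by (simp add: vd_simps del: pf_Cons pf_append gsw.simps add: pf_app_Cons pf_app_Nil)
lemma vd_e1_20: "vdiff [] [B,C,D,E]" by (simp add: vd_simps del: pf_Cons pf_append gsw.simps add: pf_app_Cons pf_app_Nil)
lemma vd_e1_21: "vdiff [B,C] [B,A]" by (simp add: vd_simps del: pf_Cons pf_append gsw.simps add: pf_app_Cons pf_app_Nil)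
lemma vd_e1_22: "vdiff [B,C] [B]" by (simp add: vd_simps del: pf_Cons pf_append gsw.simps add: pf_app_Cons pf_app_Nil)
lemma vd_e1_23: "vdiff [B,C] [B,C,D]" by (simp add: vd_simps del: pf_Cons pf_append gsw.simps add: pf_app_Cons pf_app_Nil)
lemma vd_e1_24: "vdiff [B,C] []" by (simp add: vd_simps del: pf_Cons pf_append gsw.simps add: pf_app_Cons pf_app_Nil)
lemma vd_e1_25: "vdiff [B,C] [B,C,D,E]" by (simp add: vd_simps del: pf_Cons pf_append gsw.simps add: pf_app_Cons pf_app_Nil)
lemma vd_e1_26: "vdiff [B,C,D,E] [B,A]" by (simp add: vd_simps del: pf_Cons pf_append gsw.simps add: pf_app_Cons pf_app_Nil)
lemma vd_e1_27: "vdiff [B,C,D,E] [B]" by (simp add: vd_simps del: pf_Cons pf_append gsw.simps add: pf_app_Cons pf_app_Nil)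
lemma vd_e1_28: "vdiff [B,C,D,E] [B,C,D]" by (simp add: vd_simps del: pf_Cons pf_append gsw.simps add: pf_app_Cons pf_app_Nil)
lemma vd_e1_29: "vdiff [B,C,D,E] []" by (simp add: vd_simps del: pf_Cons pf_append gsw.simps add: pf_app_Cons pf_app_Nil)
lemma vd_e1_30: "vdiff [B,C,D,E] [B,C]" by (simp add: vd_simps del: pf_Cons pf_append gsw.simps add: pf_app_Cons pf_app_Nil)
lemmas vd_e1 = vd_e1_1 vd_e1_2 vd_e1_3 vd_e1_4 vd_e1_5 vd_e1_6 vd_e1_7 vd_e1_8 vd_e1_9 vd_e1_10 vd_e1_11 vd_e1_12 vd_e1_13 vd_e1_14 vd_e1_15 vd_e1_16 vd_e1_17 vd_e1_18 vd_e1_19 vd_e1_20 vd_e1_21 vd_e1_22 vd_e1_23 vd_e1_24 vd_e1_25 vd_e1_26 vd_e1_27 vd_e1_28 vd_e1_29 vd_e1_30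

lemma vd_e2_1: "vdiff [B,A] []" by (simp add: vd_simps del: pf_Cons pf_append gsw.simps add: pf_app_Cons pf_app_Nil)
lemma vd_e2_2: "vdiff [B,A] [B,C,A,C]" by (simp add: vd_simps del: pf_Cons pf_append gsw.simps add: pf_app_Cons pf_app_Nil)
lemma vd_e2_3: "vdiff [B,A] [B]" by (simp add: vd_simps del: pf_Cons pf_append gsw.simps add: pf_app_Cons pf_app_Nil)
lemma vd_e2_4: "vdiff [B,A] [B,C]" by (simp add: vd_simps del: pf_Cons pf_append gsw.simps add: pf_app_Cons pf_app_Nil)
lemma vd_e2_5: "vdiff [B,A] [B,C,A,C,D,E]" by (simp add: vd_simps del: pf_Cons pf_append gsw.simps add: pf_app_Cons pf_app_Nil)
lemma vd_e2_6: "vdiff [] [B,A]" by (simp add: vd_simps del: pf_Cons pf_append gsw.simps add: pf_app_Cons pf_app_Nil)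
lemma vd_e2_7: "vdiff [] [B,C,A,C]" by (simp add: vd_simps del: pf_Cons pf_append gsw.simps add: pf_app_Cons pf_app_Nil)
lemma vd_e2_8: "vdiff [] [B]" by (simp add: vd_simps del: pf_Cons pf_append gsw.simps add: pf_app_Cons pf_app_Nil)
lemma vd_e2_9: "vdiff [] [B,C]" by (simp add: vd_simps del: pf_Cons pf_append gsw.simps add: pf_app_Cons pf_app_Nil)
lemma vd_e2_10: "vdiff [] [B,C,A,C,D,E]" by (simp add: vd_simps del: pf_Cons pf_append gsw.simps add: pf_app_Cons pf_app_Nil)
lemma vd_e2_11: "vdiff [B,C,A,C] [B,A]" by (simp add: vd_simps del: pf_Cons pf_append gsw.simps add: pf_app_Cons pf_app_Nil)
lemma vd_e2_12: "vdiff [B,C,A,C] []" by (simp add: vd_simps del: pf_Cons pf_append gsw.simps add: pf_app_Cons pf_app_Nil)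
lemma vd_e2_13: "vdiff [B,C,A,C] [B]" by (simp add: vd_simps del: pf_Cons pf_append gsw.simps add: pf_app_Cons pf_app_Nil)
lemma vd_e2_14: "vdiff [B,C,A,C] [B,C]" by (simp add: vd_simps del: pf_Cons pf_append gsw.simps add: pf_app_Cons pf_app_Nil)
lemma vd_e2_15: "vdiff [B,C,A,C] [B,C,A,C,D,E]" by (simp add: vd_simps del: pf_Cons pf_append gsw.simps add: pf_app_Cons pf_app_Nil)
lemma vd_e2_16: "vdiff [B] [B,A]" by (simp add: vd_simps del: pf_Cons pf_append gsw.simps add: pf_app_Cons pf_app_Nil)
lemma vd_e2_17: "vdiff [B] []" by (simp add: vd_simps del: pf_Cons pf_append gsw.simps add: pf_app_Cons pf_app_Nil)
lemma vd_e2_18: "vdiff [B] [B,C,A,C]" by (simp add: vd_simps del: pf_Cons pf_append gsw.simps add: pf_app_Cons pf_app_Nil)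
lemma vd_e2_19: "vdiff [B] [B,C]" by (simp add: vd_simps del: pf_Cons pf_append gsw.simps add: pf_app_Cons pf_app_Nil)
lemma vd_e2_20: "vdiff [B] [B,C,A,C,D,E]" by (simp add: vd_simps del: pf_Cons pf_append gsw.simps add: pf_app_Cons pf_app_Nil)
lemma vd_e2_21: "vdiff [B,C] [B,A]" by (simp add: vd_simps del: pf_Cons pf_append gsw.simps add: pf_app_Cons pf_app_Nil)
lemma vd_e2_22: "vdiff [B,C] []" by (simp add: vd_simps del: pf_Cons pf_append gsw.simps add: pf_app_Cons pf_app_Nil)
lemma vd_e2_23: "vdiff [B,C] [B,C,A,C]" by (simp add: vd_simps del: pf_Cons pf_append gsw.simps add: pf_app_Cons pf_app_Nil)
lemma vd_e2_24: "vdiff [B,C] [B]" by (simp add: vd_simps del: pf_Cons pf_append gsw.simps add: pf_app_Cons pf_app_Nil)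
lemma vd_e2_25: "vdiff [B,C] [B,C,A,C,D,E]" by (simp add: vd_simps del: pf_Cons pf_append gsw.simps add: pf_app_Cons pf_app_Nil)
lemma vd_e2_26: "vdiff [B,C,A,C,D,E] [B,A]" by (simp add: vd_simps del: pf_Cons pf_append gsw.simps add: pf_app_Cons pf_app_Nil)
lemma vd_e2_27: "vdiff [B,C,A,C,D,E] []" by (simp add: vd_simps del: pf_Cons pf_append gsw.simps add: pf_app_Cons pf_app_Nil)
lemma vd_e2_28: "vdiff [B,C,A,C,D,E] [B,C,A,C]" by (simp add: vd_simps del: pf_Cons pf_append gsw.simps add: pf_app_Cons pf_app_Nil)
lemma vd_e2_29: "vdiff [B,C,A,C,D,E] [B]" by (simp add: vd_simps del: pf_Cons pf_append gsw.simps add: pf_app_Cons pf_app_Nil)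
lemma vd_e2_30: "vdiff [B,C,A,C,D,E] [B,C]" by (simp add: vd_simps del: pf_Cons pf_append gsw.simps add: pf_app_Cons pf_app_Nil)
lemmas vd_e2 = vd_e2_1 vd_e2_2 vd_e2_3 vd_e2_4 vd_e2_5 vd_e2_6 vd_e2_7 vd_e2_8 vd_e2_9 vd_e2_10 vd_e2_11 vd_e2_12 vd_e2_13 vd_e2_14 vd_e2_15 vd_e2_16 vd_e2_17 vd_e2_18 vd_e2_19 vd_e2_20 vd_e2_21 vd_e2_22 vd_e2_23 vd_e2_24 vd_e2_25 vd_e2_26 vd_e2_27 vd_e2_28 vd_e2_29 vd_e2_30

lemma vd_e3_1: "vdiff [B,C] [B]" by (simp add: vd_simps del: pf_Cons pf_append gsw.simps add: pf_app_Cons pf_app_Nil)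
lemma vd_e3_2: "vdiff [B,C] [B,A,D]" by (simp add: vd_simps del: pf_Cons pf_append gsw.simps add: pf_app_Cons pf_app_Nil)
lemma vd_e3_3: "vdiff [B,C] []" by (simp add: vd_simps del: pf_Cons pf_append gsw.simps add: pf_app_Cons pf_app_Nil)
lemma vd_e3_4: "vdiff [B,C] [B,A]" by (simp add: vd_simps del: pf_Cons pf_append gsw.simps add: pf_app_Cons pf_app_Nil)
lemma vd_e3_5: "vdiff [B,C] [B,A,D,F]" by (simp add: vd_simps del: pf_Cons pf_append gsw.simps add: pf_app_Cons pf_app_Nil)
lemma vd_e3_6: "vdiff [B] [B,C]" by (simp add: vd_simps del: pf_Cons pf_append gsw.simps add: pf_app_Cons pf_app_Nil)
lemma vd_e3_7: "vdiff [B] [B,A,D]" by (simp add: vd_simps del: pf_Cons pf_append gsw.simps add: pf_app_Cons pf_app_Nil)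
lemma vd_e3_8: "vdiff [B] []" by (simp add: vd_simps del: pf_Cons pf_append gsw.simps add: pf_app_Cons pf_app_Nil)
lemma vd_e3_9: "vdiff [B] [B,A]" by (simp add: vd_simps del: pf_Cons pf_append gsw.simps add: pf_app_Cons pf_app_Nil)
lemma vd_e3_10: "vdiff [B] [B,A,D,F]" by (simp add: vd_simps del: pf_Cons pf_append gsw.simps add: pf_app_Cons pf_app_Nil)
lemma vd_e3_11: "vdiff [B,A,D] [B,C]" by (simp add: vd_simps del: pf_Cons pf_append gsw.simps add: pf_app_Cons pf_app_Nil)
lemma vd_e3_12: "vdiff [B,A,D] [B]" by (simp add: vd_simps del: pf_Cons pf_append gsw.simps add: pf_app_Cons pf_app_Nil)
lemma vd_e3_13: "vdiff [B,A,D] []" by (simp add: vd_simps del: pf_Cons pf_append gsw.simps add: pf_app_Cons pf_app_Nil)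
lemma vd_e3_14: "vdiff [B,A,D] [B,A]" by (simp add: vd_simps del: pf_Cons pf_append gsw.simps add: pf_app_Cons pf_app_Nil)
lemma vd_e3_15: "vdiff [B,A,D] [B,A,D,F]" by (simp add: vd_simps del: pf_Cons pf_append gsw.simps add: pf_app_Cons pf_app_Nil)
lemma vd_e3_16: "vdiff [] [B,C]" by (simp add: vd_simps del: pf_Cons pf_append gsw.simps add: pf_app_Cons pf_app_Nil)
lemma vd_e3_17: "vdiff [] [B]" by (simp add: vd_simps del: pf_Cons pf_append gsw.simps add: pf_app_Cons pf_app_Nil)
lemma vd_e3_18: "vdiff [] [B,A,D]" by (simp add: vd_simps del: pf_Cons pf_append gsw.simps add: pf_app_Cons pf_app_Nil)
lemma vd_e3_19: "vdiff [] [B,A]" by (simp add: vd_simps del: pf_Cons pf_append gsw.simps add: pf_app_Cons pf_app_Nil)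
lemma vd_e3_20: "vdiff [] [B,A,D,F]" by (simp add: vd_simps del: pf_Cons pf_append gsw.simps add: pf_app_Cons pf_app_Nil)
lemma vd_e3_21: "vdiff [B,A] [B,C]" by (simp add: vd_simps del: pf_Cons pf_append gsw.simps add: pf_app_Cons pf_app_Nil)
lemma vd_e3_22: "vdiff [B,A] [B]" by (simp add: vd_simps del: pf_Cons pf_append gsw.simps add: pf_app_Cons pf_app_Nil)
lemma vd_e3_23: "vdiff [B,A] [B,A,D]" by (simp add: vd_simps del: pf_Cons pf_append gsw.simps add: pf_app_Cons pf_app_Nil)
lemma vd_e3_24: "vdiff [B,A] []" by (simp add: vd_simps del: pf_Cons pf_append gsw.simps add: pf_app_Cons pf_app_Nil)
lemma vd_e3_25: "vdiff [B,A] [B,A,D,F]" by (simp add: vd_simps del: pf_Cons pf_append gsw.simps add: pf_app_Cons pf_app_Nil)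
lemma vd_e3_26: "vdiff [B,A,D,F] [B,C]" by (simp add: vd_simps del: pf_Cons pf_append gsw.simps add: pf_app_Cons pf_app_Nil)
lemma vd_e3_27: "vdiff [B,A,D,F] [B]" by (simp add: vd_simps del: pf_Cons pf_append gsw.simps add: pf_app_Cons pf_app_Nil)
lemma vd_e3_28: "vdiff [B,A,D,F] [B,A,D]" by (simp add: vd_simps del: pf_Cons pf_append gsw.simps add: pf_app_Cons pf_app_Nil)
lemma vd_e3_29: "vdiff [B,A,D,F] []" by (simp add: vd_simps del: pf_Cons pf_append gsw.simps add: pf_app_Cons pf_app_Nil)
lemma vd_e3_30: "vdiff [B,A,D,F] [B,A]" by (simp add: vd_simps del: pf_Cons pf_append gsw.simps add: pf_app_Cons pf_app_Nil)
lemmas vd_e3 = vd_e3_1 vd_e3_2 vd_e3_3 vd_e3_4 vd_e3_5 vd_e3_6 vd_e3_7 vd_e3_8 vd_e3_9 vd_e3_10 vd_e3_11 vd_e3_12 vd_e3_13 vd_e3_14 vd_e3_15 vd_e3_16 vd_e3_17 vd_e3_18 vd_e3_19 vd_e3_20 vd_e3_21 vd_e3_22 vd_e3_23 vd_e3_24 vd_e3_25 vd_e3_26 vd_e3_27 vd_e3_28 vd_e3_29 vd_e3_30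

lemma vd_e4_1: "vdiff [B,C] []" by (simp add: vd_simps del: pf_Cons pf_append gsw.simps add: pf_app_Cons pf_app_Nil)
lemma vd_e4_2: "vdiff [B,C] [B,A,C,A]" by (simp add: vd_simps del: pf_Cons pf_append gsw.simps add: pf_app_Cons pf_app_Nil)
lemma vd_e4_3: "vdiff [B,C] [B]" by (simp add: vd_simps del: pf_Cons pf_append gsw.simps add: pf_app_Cons pf_app_Nil)
lemma vd_e4_4: "vdiff [B,C] [B,A]" by (simp add: vd_simps del: pf_Cons pf_append gsw.simps add: pf_app_Cons pf_app_Nil)
lemma vd_e4_5: "vdiff [B,C] [B,A,C,A,D,F]" by (simp add: vd_simps del: pf_Cons pf_append gsw.simps add: pf_app_Cons pf_app_Nil)
lemma vd_e4_6: "vdiff [] [B,C]" by (simp add: vd_simps del: pf_Cons pf_append gsw.simps add: pf_app_Cons pf_app_Nil)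
lemma vd_e4_7: "vdiff [] [B,A,C,A]" by (simp add: vd_simps del: pf_Cons pf_append gsw.simps add: pf_app_Cons pf_app_Nil)
lemma vd_e4_8: "vdiff [] [B]" by (simp add: vd_simps del: pf_Cons pf_append gsw.simps add: pf_app_Cons pf_app_Nil)
lemma vd_e4_9: "vdiff [] [B,A]" by (simp add: vd_simps del: pf_Cons pf_append gsw.simps add: pf_app_Cons pf_app_Nil)
lemma vd_e4_10: "vdiff [] [B,A,C,A,D,F]" by (simp add: vd_simps del: pf_Cons pf_append gsw.simps add: pf_app_Cons pf_app_Nil)
lemma vd_e4_11: "vdiff [B,A,C,A] [B,C]" by (simp add: vd_simps del: pf_Cons pf_append gsw.simps add: pf_app_Cons pf_app_Nil)
lemma vd_e4_12: "vdiff [B,A,C,A] []" by (simp add: vd_simps del: pf_Cons pf_append gsw.simps add: pf_app_Cons pf_app_Nil)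
lemma vd_e4_13: "vdiff [B,A,C,A] [B]" by (simp add: vd_simps del: pf_Cons pf_append gsw.simps add: pf_app_Cons pf_app_Nil)
lemma vd_e4_14: "vdiff [B,A,C,A] [B,A]" by (simp add: vd_simps del: pf_Cons pf_append gsw.simps add: pf_app_Cons pf_app_Nil)
lemma vd_e4_15: "vdiff [B,A,C,A] [B,A,C,A,D,F]" by (simp add: vd_simps del: pf_Cons pf_append gsw.simps add: pf_app_Cons pf_app_Nil)
lemma vd_e4_16: "vdiff [B] [B,C]" by (simp add: vd_simps del: pf_Cons pf_append gsw.simps add: pf_app_Cons pf_app_Nil)
lemma vd_e4_17: "vdiff [B] []" by (simp add: vd_simps del: pf_Cons pf_append gsw.simps add: pf_app_Cons pf_app_Nil)
lemma vd_e4_18: "vdiff [B] [B,A,C,A]" by (simp add: vd_simps del: pf_Cons pf_append gsw.simps add: pf_app_Cons pf_app_Nil)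
lemma vd_e4_19: "vdiff [B] [B,A]" by (simp add: vd_simps del: pf_Cons pf_append gsw.simps add: pf_app_Cons pf_app_Nil)
lemma vd_e4_20: "vdiff [B] [B,A,C,A,D,F]" by (simp add: vd_simps del: pf_Cons pf_append gsw.simps add: pf_app_Cons pf_app_Nil)
lemma vd_e4_21: "vdiff [B,A] [B,C]" by (simp add: vd_simps del: pf_Cons pf_append gsw.simps add: pf_app_Cons pf_app_Nil)
lemma vd_e4_22: "vdiff [B,A] []" by (simp add: vd_simps del: pf_Cons pf_append gsw.simps add: pf_app_Cons pf_app_Nil)
lemma vd_e4_23: "vdiff [B,A] [B,A,C,A]" by (simp add: vd_simps del: pf_Cons pf_append gsw.simps add: pf_app_Cons pf_app_Nil)
lemma vd_e4_24: "vdiff [B,A] [B]" by (simp add: vd_simps del: pf_Cons pf_append gsw.simps add: pf_app_Cons pf_app_Nil)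
lemma vd_e4_25: "vdiff [B,A] [B,A,C,A,D,F]" by (simp add: vd_simps del: pf_Cons pf_append gsw.simps add: pf_app_Cons pf_app_Nil)
lemma vd_e4_26: "vdiff [B,A,C,A,D,F] [B,C]" by (simp add: vd_simps del: pf_Cons pf_append gsw.simps add: pf_app_Cons pf_app_Nil)
lemma vd_e4_27: "vdiff [B,A,C,A,D,F] []" by (simp add: vd_simps del: pf_Cons pf_append gsw.simps add: pf_app_Cons pf_app_Nil)
lemma vd_e4_28: "vdiff [B,A,C,A,D,F] [B,A,C,A]" by (simp add: vd_simps del: pf_Cons pf_append gsw.simps add: pf_app_Cons pf_app_Nil)
lemma vd_e4_29: "vdiff [B,A,C,A,D,F] [B]" by (simp add: vd_simps del: pf_Cons pf_append gsw.simps add: pf_app_Cons pf_app_Nil)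
lemma vd_e4_30: "vdiff [B,A,C,A,D,F] [B,A]" by (simp add: vd_simps del: pf_Cons pf_append gsw.simps add: pf_app_Cons pf_app_Nil)
lemmas vd_e4 = vd_e4_1 vd_e4_2 vd_e4_3 vd_e4_4 vd_e4_5 vd_e4_6 vd_e4_7 vd_e4_8 vd_e4_9 vd_e4_10 vd_e4_11 vd_e4_12 vd_e4_13 vd_e4_14 vd_e4_15 vd_e4_16 vd_e4_17 vd_e4_18 vd_e4_19 vd_e4_20 vd_e4_21 vd_e4_22 vd_e4_23 vd_e4_24 vd_e4_25 vd_e4_26 vd_e4_27 vd_e4_28 vd_e4_29 vd_e4_30

lemma ffA2: "{f \<in> set factsL. f ! 0 = A} = {[A,C,D],[A,E,C],[A,D,E]}"
  unfolding ffA by auto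
lemma ffC2: "{f \<in> set factsL. f ! 0 = C} = {[C,D,F],[C,F,A],[C,A,D]}"
  unfolding ffC by auto

abbreviation CONCL :: "vertex set set \<Rightarrow> vertex set \<Rightarrow> bool" where
  "CONCL R e \<equiv> (\<exists>!T. is_triangle T \<and> e \<subseteq> T) \<and>
           (\<exists>R'. is_lozenge R' \<and> R' \<noteq> R \<and> (\<exists>T\<in>R'. e \<subseteq> T) \<and> is_parallelogram (R \<union> R') \<and>
              (\<forall>R''. is_lozenge R'' \<and> R'' \<noteq> R \<and> (\<exists>T\<in>R''. e \<subseteq> T) \<longrightarrow> R'' = R'))"

lemma case_e1:
  assumes lozR: "is_lozenge R" and R: "R = {face h [B,C,A], face h [B,A,C]}"
    and e: "e = {vtx (h @ pw [B]), vtx (h @ pw [B,C])}" and nb: "\<not> (\<forall>T\<in>R. e \<subseteq> T)"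
  shows "CONCL R e"
proof -
  define R' where "R' = {face (h @ pw [B,C]) [D,F,E], face (h @ pw [B,C]) [D,E,F]}"
  have e': "e = edg (h @ pw [B]) C" unfolding e edg_def by simp
  have f1R: "face (h @ pw [B]) [C,A,D] \<in> R" using face_rot[OF mem_facts(5), of h] R by (simp add: rot_def)
  have lozR': "is_lozenge R'" unfolding R'_def
    by (rule LOZ_intro[OF mem_facts(10) mem_facts(9)]) simp_all
  have f3R': "face (h @ pw [B]) [C,D,F] \<in> R'" using face_rot[OF mem_facts(7), of "h @ pw [B]"]
    unfolding R'_def by (simp add: rot_def)
  have v1: "vtx (h @ pw [B,C,D,F]) = vtx (h @ pw [B])"
    using vtx_fact[OF mem_facts(7), of "h @ pw [B]"] by simp
  have par: "is_parallelogram (R \<union> R')"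
  proof (rule PG[of "[[B,A],[B],[B,C,D],[],[B,C],[B,C,D,E]]" "R \<union> R'" h])
    show "\<forall>a\<in>set [[B,A],[B],[B,C,D],[],[B,C],[B,C,D,E]]. \<forall>b\<in>set [[B,A],[B],[B,C,D],[],[B,C],[B,C,D,E]]. a \<noteq> b \<longrightarrow> vdiff a b"
      by (simp only: set_simps ball_simps list.inject list.distinct gen.distinct simp_thms vd_e1)
    have t1: "face h [B,A,C] = {vtx (h @ pw [B,A]), vtx (h @ pw [B]), vtx (h @ pw [])}" unfolding face_def by auto
    have t2: "face h [B,C,A] = {vtx (h @ pw [B]), vtx (h @ pw []), vtx (h @ pw [B,C])}" unfolding face_def by auto
    have t3: "face (h @ pw [B,C]) [D,F,E] = {vtx (h @ pw [B]), vtx (h @ pw [B,C,D]), vtx (h @ pw [B,C])}"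
      using v1 unfolding face_def by auto
    have t4: "face (h @ pw [B,C]) [D,E,F] = {vtx (h @ pw [B,C,D]), vtx (h @ pw [B,C]), vtx (h @ pw [B,C,D,E])}"
      unfolding face_def by auto
    show "R \<union> R' = {{vtx (h @ pw ([[B,A],[B],[B,C,D],[],[B,C],[B,C,D,E]] ! 0)), vtx (h @ pw ([[B,A],[B],[B,C,D],[],[B,C],[B,C,D,E]] ! 1)), vtx (h @ pw ([[B,A],[B],[B,C,D],[],[B,C],[B,C,D,E]] ! 3))},
                 {vtx (h @ pw ([[B,A],[B],[B,C,D],[],[B,C],[B,C,D,E]] ! 1)), vtx (h @ pw ([[B,A],[B],[B,C,D],[],[B,C],[B,C,D,E]] ! 3)), vtx (h @ pw ([[B,A],[B],[B,C,D],[],[B,C],[B,C,D,E]] ! 4))},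
                 {vtx (h @ pw ([[B,A],[B],[B,C,D],[],[B,C],[B,C,D,E]] ! 1)), vtx (h @ pw ([[B,A],[B],[B,C,D],[],[B,C],[B,C,D,E]] ! 2)), vtx (h @ pw ([[B,A],[B],[B,C,D],[],[B,C],[B,C,D,E]] ! 4))},
                 {vtx (h @ pw ([[B,A],[B],[B,C,D],[],[B,C],[B,C,D,E]] ! 2)), vtx (h @ pw ([[B,A],[B],[B,C,D],[],[B,C],[B,C,D,E]] ! 4)), vtx (h @ pw ([[B,A],[B],[B,C,D],[],[B,C],[B,C,D,E]] ! 5))}}"
      unfolding R R'_def t1 t2 t3 t4 by (simp del: pw_def) (simp only: insert_commute; blast)
  qed simp_all
  show ?thesis
    by (rule CASE[OF lozR e' ffC f1R nb _ _ _ _ lozR' f3R' par]) (simp_all add: hbd_def)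
qed

lemma case_e2:
  assumes lozR: "is_lozenge R" and R: "R = {face h [B,C,A], face h [B,A,C]}"
    and e: "e = {vtx h, vtx (h @ pw [B,C])}" and nb: "\<not> (\<forall>T\<in>R. e \<subseteq> T)"
  shows "CONCL R e"
proof -
  define R' where "R' = {face (h @ pw [B,C,A,C]) [D,F,E], face (h @ pw [B,C,A,C]) [D,E,F]}"
  have vfx: "vtx (h @ pw [B,C,A]) = vtx h" using vtx_fact[OF mem_facts(5), of h] by simp
  have vfx2: "vtx (h @ pw [B,C,A,C,D]) = vtx (h @ pw [B,C])" using vtx_fact[OF mem_facts(1), of "h @ pw [B,C]"] by simp
  have vfx3: "vtx (h @ pw [B,C,A,C,D,F]) = vtx (h @ pw [B,C,A])" using vtx_fact[OF mem_facts(7), of "h @ pw [B,C,A]"] by simp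
  have e': "e = edg (h @ pw [B,C]) A" unfolding e edg_def using vfx by auto
  have f1R: "face (h @ pw [B,C]) [A,D,E] \<in> R" using face_rot[OF mem_facts(5), of h] face_rot[OF mem_facts(6), of "h @ pw [B]"] R by (simp add: rot_def)
  have lozR': "is_lozenge R'" unfolding R'_def
    by (rule LOZ_intro[OF mem_facts(10) mem_facts(9)]) simp_all
  have f3R': "face (h @ pw [B,C]) [A,C,D] \<in> R'" using face_rot[OF mem_facts(1), of "h @ pw [B,C]"] face_rot[OF mem_facts(7), of "h @ pw [B,C,A]"]
    unfolding R'_def by (simp add: rot_def)
  have par: "is_parallelogram (R \<union> R')"
  proof (rule PG[of "[[B,A],[],[B,C,A,C],[B],[B,C],[B,C,A,C,D,E]]" "R \<union> R'" h])
    show "\<forall>a\<in>set [[B,A],[],[B,C,A,C],[B],[B,C],[B,C,A,C,D,E]]. \<forall>b\<in>set [[B,A],[],[B,C,A,C],[B],[B,C],[B,C,A,C,D,E]]. a \<noteq> b \<longrightarrow> vdiff a b"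
      by (simp only: set_simps ball_simps list.inject list.distinct gen.distinct simp_thms vd_e2)
    have t0: "face h [B,A,C] = {vtx (h @ pw [B,A]), vtx (h @ pw []), vtx (h @ pw [B])}"
      using vfx unfolding face_def by auto
    have t1: "face h [B,C,A] = {vtx (h @ pw []), vtx (h @ pw [B]), vtx (h @ pw [B,C])}"
      using vfx unfolding face_def by auto
    have t2: "face (h @ pw [B,C,A,C]) [D,F,E] = {vtx (h @ pw []), vtx (h @ pw [B,C,A,C]), vtx (h @ pw [B,C])}"
      using vfx vfx2 vfx3 unfolding face_def by auto
    have t3: "face (h @ pw [B,C,A,C]) [D,E,F] = {vtx (h @ pw [B,C,A,C]), vtx (h @ pw [B,C]), vtx (h @ pw [B,C,A,C,D,E])}"
      using vfx2 unfolding face_def by auto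
    show "R \<union> R' = {{vtx (h @ pw ([[B,A],[],[B,C,A,C],[B],[B,C],[B,C,A,C,D,E]] ! 0)), vtx (h @ pw ([[B,A],[],[B,C,A,C],[B],[B,C],[B,C,A,C,D,E]] ! 1)), vtx (h @ pw ([[B,A],[],[B,C,A,C],[B],[B,C],[B,C,A,C,D,E]] ! 3))},
                 {vtx (h @ pw ([[B,A],[],[B,C,A,C],[B],[B,C],[B,C,A,C,D,E]] ! 1)), vtx (h @ pw ([[B,A],[],[B,C,A,C],[B],[B,C],[B,C,A,C,D,E]] ! 3)), vtx (h @ pw ([[B,A],[],[B,C,A,C],[B],[B,C],[B,C,A,C,D,E]] ! 4))},
                 {vtx (h @ pw ([[B,A],[],[B,C,A,C],[B],[B,C],[B,C,A,C,D,E]] ! 1)), vtx (h @ pw ([[B,A],[],[B,C,A,C],[B],[B,C],[B,C,A,C,D,E]] ! 2)), vtx (h @ pw ([[B,A],[],[B,C,A,C],[B],[B,C],[B,C,A,C,D,E]] ! 4))},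
                 {vtx (h @ pw ([[B,A],[],[B,C,A,C],[B],[B,C],[B,C,A,C,D,E]] ! 2)), vtx (h @ pw ([[B,A],[],[B,C,A,C],[B],[B,C],[B,C,A,C,D,E]] ! 4)), vtx (h @ pw ([[B,A],[],[B,C,A,C],[B],[B,C],[B,C,A,C,D,E]] ! 5))}}"
      unfolding R R'_def t0 t1 t2 t3 by (simp del: pw_def) (simp only: insert_commute; blast)
  qed simp_all
  show ?thesis
    by (rule CASE[OF lozR e' ffA f1R nb _ _ _ _ lozR' f3R' par]) (simp_all add: hbd_def)
qed

lemma case_e3:
  assumes lozR: "is_lozenge R" and R: "R = {face h [B,C,A], face h [B,A,C]}"
    and e: "e = {vtx (h @ pw [B]), vtx (h @ pw [B,A])}" and nb: "\<not> (\<forall>T\<in>R. e \<subseteq> T)"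
  shows "CONCL R e"
proof -
  define R' where "R' = {face (h @ pw [B,A]) [D,E,F], face (h @ pw [B,A]) [D,F,E]}"
  have vfx: "vtx (h @ pw [B,A,D,E]) = vtx (h @ pw [B])" using vtx_fact[OF mem_facts(2), of "h @ pw [B]"] by simp
  have e': "e = edg (h @ pw [B]) A" unfolding e edg_def using vfx by auto
  have f1R: "face (h @ pw [B]) [A,C,D] \<in> R" using face_rot[OF mem_facts(4), of h] R by (simp add: rot_def)
  have lozR': "is_lozenge R'" unfolding R'_def
    by (rule LOZ_intro[OF mem_facts(9) mem_facts(10)]) simp_all
  have f3R': "face (h @ pw [B]) [A,D,E] \<in> R'" using face_rot[OF mem_facts(2), of "h @ pw [B]"]
    unfolding R'_def by (simp add: rot_def)
  have par: "is_parallelogram (R \<union> R')"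
  proof (rule PG[of "[[B,C],[B],[B,A,D],[],[B,A],[B,A,D,F]]" "R \<union> R'" h])
    show "\<forall>a\<in>set [[B,C],[B],[B,A,D],[],[B,A],[B,A,D,F]]. \<forall>b\<in>set [[B,C],[B],[B,A,D],[],[B,A],[B,A,D,F]]. a \<noteq> b \<longrightarrow> vdiff a b"
      by (simp only: set_simps ball_simps list.inject list.distinct gen.distinct simp_thms vd_e3)
    have t0: "face h [B,C,A] = {vtx (h @ pw [B,C]), vtx (h @ pw [B]), vtx (h @ pw [])}"
      using vfx unfolding face_def by auto
    have t1: "face h [B,A,C] = {vtx (h @ pw [B]), vtx (h @ pw []), vtx (h @ pw [B,A])}"
      using vfx unfolding face_def by auto
    have t2: "face (h @ pw [B,A]) [D,E,F] = {vtx (h @ pw [B]), vtx (h @ pw [B,A,D]), vtx (h @ pw [B,A])}"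
      using vfx unfolding face_def by auto
    have t3: "face (h @ pw [B,A]) [D,F,E] = {vtx (h @ pw [B,A,D]), vtx (h @ pw [B,A]), vtx (h @ pw [B,A,D,F])}"
      using vfx unfolding face_def by auto
    show "R \<union> R' = {{vtx (h @ pw ([[B,C],[B],[B,A,D],[],[B,A],[B,A,D,F]] ! 0)), vtx (h @ pw ([[B,C],[B],[B,A,D],[],[B,A],[B,A,D,F]] ! 1)), vtx (h @ pw ([[B,C],[B],[B,A,D],[],[B,A],[B,A,D,F]] ! 3))},
                 {vtx (h @ pw ([[B,C],[B],[B,A,D],[],[B,A],[B,A,D,F]] ! 1)), vtx (h @ pw ([[B,C],[B],[B,A,D],[],[B,A],[B,A,D,F]] ! 3)), vtx (h @ pw ([[B,C],[B],[B,A,D],[],[B,A],[B,A,D,F]] ! 4))},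
                 {vtx (h @ pw ([[B,C],[B],[B,A,D],[],[B,A],[B,A,D,F]] ! 1)), vtx (h @ pw ([[B,C],[B],[B,A,D],[],[B,A],[B,A,D,F]] ! 2)), vtx (h @ pw ([[B,C],[B],[B,A,D],[],[B,A],[B,A,D,F]] ! 4))},
                 {vtx (h @ pw ([[B,C],[B],[B,A,D],[],[B,A],[B,A,D,F]] ! 2)), vtx (h @ pw ([[B,C],[B],[B,A,D],[],[B,A],[B,A,D,F]] ! 4)), vtx (h @ pw ([[B,C],[B],[B,A,D],[],[B,A],[B,A,D,F]] ! 5))}}"
      unfolding R R'_def t0 t1 t2 t3 by (simp del: pw_def) (simp only: insert_commute; blast)
  qed simp_all
  show ?thesis
    by (rule CASE[OF lozR e' ffA2 f1R nb _ _ _ _ lozR' f3R' par]) (simp_all add: hbd_def)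
qed

lemma case_e4:
  assumes lozR: "is_lozenge R" and R: "R = {face h [B,C,A], face h [B,A,C]}"
    and e: "e = {vtx h, vtx (h @ pw [B,A])}" and nb: "\<not> (\<forall>T\<in>R. e \<subseteq> T)"
  shows "CONCL R e"
proof -
  define R' where "R' = {face (h @ pw [B,A,C,A]) [D,E,F], face (h @ pw [B,A,C,A]) [D,F,E]}"
  have vfx: "vtx (h @ pw [B,A,C]) = vtx h" using vtx_fact[OF mem_facts(4), of h] by simp
  have vfx2: "vtx (h @ pw [B,A,C,A,D]) = vtx (h @ pw [B,A])" using vtx_fact[OF mem_facts(6), of "h @ pw [B,A]"] by simp
  have vfx3: "vtx (h @ pw [B,A,C,A,D,E]) = vtx (h @ pw [B,A,C])" using vtx_fact[OF mem_facts(2), of "h @ pw [B,A,C]"] by simp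
  have e': "e = edg (h @ pw [B,A]) C" unfolding e edg_def using vfx by auto
  have f1R: "face (h @ pw [B,A]) [C,D,F] \<in> R" using face_rot[OF mem_facts(4), of h] face_rot[OF mem_facts(1), of "h @ pw [B]"] R by (simp add: rot_def)
  have lozR': "is_lozenge R'" unfolding R'_def
    by (rule LOZ_intro[OF mem_facts(9) mem_facts(10)]) simp_all
  have f3R': "face (h @ pw [B,A]) [C,A,D] \<in> R'" using face_rot[OF mem_facts(6), of "h @ pw [B,A]"] face_rot[OF mem_facts(2), of "h @ pw [B,A,C]"]
    unfolding R'_def by (simp add: rot_def)
  have par: "is_parallelogram (R \<union> R')"
  proof (rule PG[of "[[B,C],[],[B,A,C,A],[B],[B,A],[B,A,C,A,D,F]]" "R \<union> R'" h])
    show "\<forall>a\<in>set [[B,C],[],[B,A,C,A],[B],[B,A],[B,A,C,A,D,F]]. \<forall>b\<in>set [[B,C],[],[B,A,C,A],[B],[B,A],[B,A,C,A,D,F]]. a \<noteq> b \<longrightarrow> vdiff a b"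
      by (simp only: set_simps ball_simps list.inject list.distinct gen.distinct simp_thms vd_e4)
    have t0: "face h [B,C,A] = {vtx (h @ pw [B,C]), vtx (h @ pw []), vtx (h @ pw [B])}"
      using vfx unfolding face_def by auto
    have t1: "face h [B,A,C] = {vtx (h @ pw []), vtx (h @ pw [B]), vtx (h @ pw [B,A])}"
      using vfx unfolding face_def by auto
    have t2: "face (h @ pw [B,A,C,A]) [D,E,F] = {vtx (h @ pw []), vtx (h @ pw [B,A,C,A]), vtx (h @ pw [B,A])}"
      using vfx vfx2 vfx3 unfolding face_def by auto
    have t3: "face (h @ pw [B,A,C,A]) [D,F,E] = {vtx (h @ pw [B,A,C,A]), vtx (h @ pw [B,A]), vtx (h @ pw [B,A,C,A,D,F])}"
      using vfx2 unfolding face_def by auto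
    show "R \<union> R' = {{vtx (h @ pw ([[B,C],[],[B,A,C,A],[B],[B,A],[B,A,C,A,D,F]] ! 0)), vtx (h @ pw ([[B,C],[],[B,A,C,A],[B],[B,A],[B,A,C,A,D,F]] ! 1)), vtx (h @ pw ([[B,C],[],[B,A,C,A],[B],[B,A],[B,A,C,A,D,F]] ! 3))},
                 {vtx (h @ pw ([[B,C],[],[B,A,C,A],[B],[B,A],[B,A,C,A,D,F]] ! 1)), vtx (h @ pw ([[B,C],[],[B,A,C,A],[B],[B,A],[B,A,C,A,D,F]] ! 3)), vtx (h @ pw ([[B,C],[],[B,A,C,A],[B],[B,A],[B,A,C,A,D,F]] ! 4))},
                 {vtx (h @ pw ([[B,C],[],[B,A,C,A],[B],[B,A],[B,A,C,A,D,F]] ! 1)), vtx (h @ pw ([[B,C],[],[B,A,C,A],[B],[B,A],[B,A,C,A,D,F]] ! 2)), vtx (h @ pw ([[B,C],[],[B,A,C,A],[B],[B,A],[B,A,C,A,D,F]] ! 4))},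
                 {vtx (h @ pw ([[B,C],[],[B,A,C,A],[B],[B,A],[B,A,C,A,D,F]] ! 2)), vtx (h @ pw ([[B,C],[],[B,A,C,A],[B],[B,A],[B,A,C,A,D,F]] ! 4)), vtx (h @ pw ([[B,C],[],[B,A,C,A],[B],[B,A],[B,A,C,A,D,F]] ! 5))}}"
      unfolding R R'_def t0 t1 t2 t3 by (simp del: pw_def) (simp only: insert_commute; blast)
  qed simp_all
  show ?thesis
    by (rule CASE[OF lozR e' ffC2 f1R nb _ _ _ _ lozR' f3R' par]) (simp_all add: hbd_def)
qed


theorem lemma11:
  assumes "is_lozenge R"
  shows "\<forall>e. boundary_edge R e \<longrightarrow>
           (\<exists>!T. is_triangle T \<and> e \<subseteq> T) \<and>
           (\<exists>R'. is_lozenge R' \<and> R' \<noteq> R \<and> (\<exists>T\<in>R'. e \<subseteq> T) \<and> is_parallelogram (R \<union> R') \<and>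
              (\<forall>R''. is_lozenge R'' \<and> R'' \<noteq> R \<and> (\<exists>T\<in>R''. e \<subseteq> T) \<longrightarrow> R'' = R'))"
proof (intro allI impI)
  fix e assume be: "boundary_edge R e"
  obtain h where R: "R = {face h [B,C,A], face h [B,A,C]}" using LOZ[OF assms] by blast
  have c: "card e = 2" and ex: "\<exists>T\<in>R. e \<subseteq> T" and nb: "\<not> (\<forall>T\<in>R. e \<subseteq> T)"
    using be unfolding boundary_edge_def by blast+
  have f2: "face h [B,C,A] = {vtx h, vtx (h @ pw [B]), vtx (h @ pw [B,C])}" by (simp add: face_def)
  have f1: "face h [B,A,C] = {vtx h, vtx (h @ pw [B]), vtx (h @ pw [B,A])}" by (simp add: face_def)
  have both: "\<forall>T\<in>R. {vtx h, vtx (h @ pw [B])} \<subseteq> T" unfolding R f1 f2 by auto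
  have "e \<subseteq> face h [B,C,A] \<or> e \<subseteq> face h [B,A,C]" using ex R by blast
  then show "CONCL R e"
  proof
    assume "e \<subseteq> face h [B,C,A]"
    then have "e \<subseteq> {vtx h, vtx (h @ pw [B]), vtx (h @ pw [B,C])}" using f2 by simp
    from two_sub[OF c this] show ?thesis
    proof (elim disjE)
      assume "e = {vtx h, vtx (h @ pw [B])}" then show ?thesis using both nb by simp
    next
      assume "e = {vtx (h @ pw [B]), vtx (h @ pw [B,C])}" then show ?thesis by (rule case_e1[OF assms R _ nb])
    next
      assume "e = {vtx h, vtx (h @ pw [B,C])}" then show ?thesis by (rule case_e2[OF assms R _ nb])
    qed
  next
    assume "e \<subseteq> face h [B,A,C]"
    then have "e \<subseteq> {vtx h, vtx (h @ pw [B]), vtx (h @ pw [B,A])}" using f1 by simp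
    from two_sub[OF c this] show ?thesis
    proof (elim disjE)
      assume "e = {vtx h, vtx (h @ pw [B])}" then show ?thesis using both nb by simp
    next
      assume "e = {vtx (h @ pw [B]), vtx (h @ pw [B,A])}" then show ?thesis by (rule case_e3[OF assms R _ nb])
    next
      assume "e = {vtx h, vtx (h @ pw [B,A])}" then show ?thesis by (rule case_e4[OF assms R _ nb])
    qed
  qed
qed


end
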